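(* Let $n$ be a positive integer and let $\widetilde\lambda:\widetilde C\to\widetilde C'$ be a morphism of $r$-perfect $\mathcal S$-complexes which is a height $n$ morphism (respectively a strong height $n$ morphism). Then there exists a height $0$ morphism (respectively a strong height $0$ morphism) $\widetilde\lambda':\Sigma^n\widetilde C\to\widetilde C'$ such that $\widetilde\lambda'\circ\widetilde\iota_n=\widetilde\lambda$.
   Context: Let $R$ be a commutative ring; graded modules are $\mathbb Z$-graded, $V[i]_j=V_{i+j}$, differentials have degree $-1$. An $\mathcal S$-complex over $R$ is a chain complex $(\widetilde C,\widetilde d)$ of finitely generated free graded $R$-modules with a graded decomposition $\widetilde C=C\oplus C[-1]\oplus\mathsf R$ in which $\widetilde d=\begin{pmatrix} d&0&0\\ v&-d&\delta_2\\ \delta_1&0&r\end{pmatrix}$. It is $r$-perfect if $\mathsf R$ is supported in even degrees (so $r=0$). A degree $k$ morphism $\widetilde C\to\widetilde C'$ is an $R$-linear map of degree $k$ of the form $\begin{pmatrix}\lambda&0&0\\ \mu&\lambda&\Delta_2\\ \Delta_1&0&\rho\end{pmatrix}$ with $\widetilde d'\widetilde\lambda=\widetilde\lambda\widetilde d$. For such a morphism between $r$-perfect complexes set $\tau_0=\rho$ and, for $i\ge0$, $\tau_{i+1}=\delta_1'v'^i\Delta_2+\Delta_1v^i\delta_2+\sum_{j=0}^{i-1}\delta_1'v'^j\mu v^{i-1-j}\delta_2:\mathsf R\to\mathsf R'$. A height $n$ morphism ($n\ge0$) is an even degree morphism between $r$-perfect $\mathcal S$-complexes with $\tau_j=0$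 for all $0\le j<n$; it is strong height $n$ if moreover $\tau_n$ is an isomorphism. For $r$-perfect $\widetilde C$ and $n\ge1$, $\Sigma^n\widetilde C$ is the $\mathcal S$-complex with irreducible part $C_{\Sigma^n}=C[-2n]\oplus\bigoplus_{i=0}^{n-1}\mathsf R[-2i-1]$ (summands ordered $C[-2n],\mathsf R[-1],\mathsf R[-3],\dots,\mathsf R[-2n+1]$), reducible part $\mathsf R$, and differential components: $d_{\Sigma^n}$ has first row $(d,-\delta_2,-v\delta_2,\dots,-v^{n-1}\delta_2)$ and all other rows zero; $v_{\Sigma^n}$ is the $(n+1)\times(n+1)$ matrix with $(1,1)$-entry $v$, $(2,1)$-entry $\delta_1$, $(k+1,k)$-entry the identity for $2\le k\le n$, all other entries zero; $(\delta_2)_{\Sigma^n}=(v^n\delta_2,0,\dots,0)^T$; $(\delta_1)_{\Sigma^n}=(0,\dots,0,1)$ (identity on the last summand); $r_{\Sigma^n}=0$. The morphism $\widetilde\iota_n:\widetilde C\to\Sigma^n\widetilde C$ has $\lambda$-component $(1,0,\dots,0)^T$ (identity onto $C[-2n]$), $\Delta_2$-component $(0,1,0,\dots,0)^T$ (identity onto $\mathsf R[-1]$), and all other components zero. *)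

theory Defs
  imports "Jordan_Normal_Form.Matrix"
begin

(* A finitely generated free graded R-module with homogeneous basis is represented by
   the list of degrees of its basis elements. An R-linear map of degree k between two such
   modules is a matrix (rows = target basis, columns = source basis) whose (i,j) entry can
   only be nonzero if deg(target_i) = deg(source_j) + k. *)

definition graded_map :: "int list \<Rightarrow> int list \<Rightarrow> int \<Rightarrow> 'a::zero mat \<Rightarrow> bool" where
  "graded_map dv dw k M \<longleftrightarrow> M \<in> carrier_mat (length dw) (length dv) \<and>
     (\<forall>i<length dw. \<forall>j<length dv. M $$ (i,j) \<noteq> 0 \<longrightarrow> dw ! i = dv ! j + k)"

(* V[-s]: since V[i]_j = V_(i+j), a basis element of degree e in V has degree e + s in V[-s] *)
definition shift :: "int \<Rightarrow> int list \<Rightarrow> int list" where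
  "shift s dv = map (\<lambda>x. x + s) dv"

definition bidx :: "nat list \<Rightarrow> nat \<Rightarrow> nat" where
  "bidx ns i = (LEAST p. i < sum_list (take (Suc p) ns))"

definition boff :: "nat list \<Rightarrow> nat \<Rightarrow> nat" where
  "boff ns p = sum_list (take p ns)"

definition block_mat :: "nat list \<Rightarrow> nat list \<Rightarrow> (nat \<Rightarrow> nat \<Rightarrow> 'a mat) \<Rightarrow> 'a mat" where
  "block_mat rs cs B = mat (sum_list rs) (sum_list cs)
     (\<lambda>(i,j). B (bidx rs i) (bidx cs j) $$ (i - boff rs (bidx rs i), j - boff cs (bidx cs j)))"

(* S-complex data: C (degrees cdeg), R (degrees rdeg), and the components d, v, delta1, delta2, r *)
record 'a scx =
  cdeg :: "int list"
  rdeg :: "int list"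
  dm :: "'a mat"
  vm :: "'a mat"
  d1m :: "'a mat"
  d2m :: "'a mat"
  rm :: "'a mat"

(* degrees of the total module C + C[-1] + R *)
definition tdeg :: "'a scx \<Rightarrow> int list" where
  "tdeg X = cdeg X @ shift 1 (cdeg X) @ rdeg X"

definition stot :: "'a::ring_1 scx \<Rightarrow> 'a mat" where
  "stot X = (let m = length (cdeg X); r = length (rdeg X) in
     block_mat [m, m, r] [m, m, r]
       (\<lambda>p q. [[dm X, 0\<^sub>m m m, 0\<^sub>m m r],
                [vm X, - dm X, d2m X],
                [d1m X, 0\<^sub>m r m, rm X]] ! p ! q))"

definition is_scx :: "'a::comm_ring_1 scx \<Rightarrow> bool" where
  "is_scx X \<longleftrightarrow>
     graded_map (cdeg X) (cdeg X) (-1) (dm X) \<and>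
     graded_map (cdeg X) (shift 1 (cdeg X)) (-1) (vm X) \<and>
     graded_map (rdeg X) (shift 1 (cdeg X)) (-1) (d2m X) \<and>
     graded_map (cdeg X) (rdeg X) (-1) (d1m X) \<and>
     graded_map (rdeg X) (rdeg X) (-1) (rm X) \<and>
     stot X * stot X = 0\<^sub>m (length (tdeg X)) (length (tdeg X))"

definition r_perfect :: "'a::comm_ring_1 scx \<Rightarrow> bool" where
  "r_perfect X \<longleftrightarrow> is_scx X \<and> (\<forall>e\<in>set (rdeg X). even e)"

record 'a smor =
  lam :: "'a mat"
  mu :: "'a mat"
  D1 :: "'a mat"
  D2 :: "'a mat"
  rho :: "'a mat"

definition mtot :: "'a::ring_1 scx \<Rightarrow> 'a scx \<Rightarrow> 'a smor \<Rightarrow> 'a mat" where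
  "mtot X Y f = (let m = length (cdeg X); r = length (rdeg X);
                     m' = length (cdeg Y); r' = length (rdeg Y) in
     block_mat [m', m', r'] [m, m, r]
       (\<lambda>p q. [[lam f, 0\<^sub>m m' m, 0\<^sub>m m' r],
                [mu f, lam f, D2 f],
                [D1 f, 0\<^sub>m r' m, rho f]] ! p ! q))"

definition is_smor :: "int \<Rightarrow> 'a::comm_ring_1 scx \<Rightarrow> 'a scx \<Rightarrow> 'a smor \<Rightarrow> bool" where
  "is_smor k X Y f \<longleftrightarrow>
     graded_map (cdeg X) (cdeg Y) k (lam f) \<and>
     graded_map (cdeg X) (shift 1 (cdeg Y)) k (mu f) \<and>
     graded_map (rdeg X) (shift 1 (cdeg Y)) k (D2 f) \<and>
     graded_map (cdeg X) (rdeg Y) k (D1 f) \<and>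
     graded_map (rdeg X) (rdeg Y) k (rho f) \<and>
     stot Y * mtot X Y f = mtot X Y f * stot X"

fun tau :: "'a::comm_ring_1 scx \<Rightarrow> 'a scx \<Rightarrow> 'a smor \<Rightarrow> nat \<Rightarrow> 'a mat" where
  "tau X Y f 0 = rho f"
| "tau X Y f (Suc i) =
     d1m Y * (vm Y ^\<^sub>m i) * D2 f + D1 f * (vm X ^\<^sub>m i) * d2m X
     + foldr (\<lambda>j acc. d1m Y * (vm Y ^\<^sub>m j) * mu f * (vm X ^\<^sub>m (i - 1 - j)) * d2m X + acc)
         [0..<i] (0\<^sub>m (length (rdeg Y)) (length (rdeg X)))"

definition height_mor :: "nat \<Rightarrow> int \<Rightarrow> 'a::comm_ring_1 scx \<Rightarrow> 'a scx \<Rightarrow> 'a smor \<Rightarrow> bool" where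
  "height_mor n k X Y f \<longleftrightarrow> even k \<and> r_perfect X \<and> r_perfect Y \<and> is_smor k X Y f \<and>
     (\<forall>j<n. tau X Y f j = 0\<^sub>m (length (rdeg Y)) (length (rdeg X)))"

definition strong_height_mor :: "nat \<Rightarrow> int \<Rightarrow> 'a::comm_ring_1 scx \<Rightarrow> 'a scx \<Rightarrow> 'a smor \<Rightarrow> bool" where
  "strong_height_mor n k X Y f \<longleftrightarrow> height_mor n k X Y f \<and> invertible_mat (tau X Y f n)"

(* Block sizes of C_Sigma: C[-2n] followed by n copies of R.
   Block number i+1 (i = 0..n-1) is the R-summand receiving delta1 (for i = 0) resp. the
   identity from the previous R-summand; its grading shift is chosen so that all structure
   maps have the required degrees, namely R[-(2n-1-2i)]. *)
definition sig_sizes :: "nat \<Rightarrow> 'a scx \<Rightarrow> nat list" where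
  "sig_sizes n X = length (cdeg X) # replicate n (length (rdeg X))"

definition Sigma :: "nat \<Rightarrow> 'a::comm_ring_1 scx \<Rightarrow> 'a scx" where
  "Sigma n X = (let m = length (cdeg X); r = length (rdeg X); ns = sig_sizes n X in
     \<lparr> cdeg = shift (2 * int n) (cdeg X) @
              concat (map (\<lambda>i. shift (2 * int n - 1 - 2 * int i) (rdeg X)) [0..<n]),
       rdeg = rdeg X,
       dm = block_mat ns ns (\<lambda>p q. if p = 0 \<and> q = 0 then dm X
                                   else if p = 0 then - ((vm X ^\<^sub>m (q - 1)) * d2m X)
                                   else 0\<^sub>m (ns ! p) (ns ! q)),
       vm = block_mat ns ns (\<lambda>p q. if p = 0 \<and> q = 0 then vm X
                                   else if p = 1 \<and> q = 0 then d1m X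
                                   else if 1 \<le> q \<and> p = q + 1 then 1\<^sub>m r
                                   else 0\<^sub>m (ns ! p) (ns ! q)),
       d1m = block_mat [r] ns (\<lambda>p q. if q = n then 1\<^sub>m r else 0\<^sub>m r (ns ! q)),
       d2m = block_mat ns [r] (\<lambda>p q. if p = 0 then (vm X ^\<^sub>m n) * d2m X else 0\<^sub>m (ns ! p) r),
       rm = 0\<^sub>m r r \<rparr>)"

(* iota_n : X \<rightarrow> Sigma^n X (a morphism of degree 2n) *)
definition iota :: "nat \<Rightarrow> 'a::comm_ring_1 scx \<Rightarrow> 'a smor" where
  "iota n X = (let m = length (cdeg X); r = length (rdeg X); ns = sig_sizes n X in
     \<lparr> lam = block_mat ns [m] (\<lambda>p q. if p = 0 then 1\<^sub>m m else 0\<^sub>m (ns ! p) m),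
       mu = 0\<^sub>m (sum_list ns) m,
       D1 = 0\<^sub>m r m,
       D2 = block_mat ns [r] (\<lambda>p q. if p = 1 then 1\<^sub>m r else 0\<^sub>m (ns ! p) r),
       rho = 0\<^sub>m r r \<rparr>)"

end

theory Submission imports Defs begin

section \<open>Block matrix basics\<close>

lemma mult_carrier_iff: "A * B \<in> carrier_mat nr nc \<longleftrightarrow> dim_row A = nr \<and> dim_col B = nc"
  unfolding carrier_mat_def by simp

lemma add_carrier_iff: "A + B \<in> carrier_mat nr nc \<longleftrightarrow> B \<in> carrier_mat nr nc"
  unfolding carrier_mat_def by simp


lemma boff_Cons_Suc[simp]: "boff (x#xs) (Suc p) = x + boff xs p" by (simp add: boff_def)
lemma boff_0[simp]: "boff xs 0 = 0" by (simp add: boff_def)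

lemma sum_take_mono: "p \<le> q \<Longrightarrow> sum_list (take p (ns::nat list)) \<le> sum_list (take q ns)"
proof -
  assume "p \<le> q"
  then have "take q ns = take p ns @ take (q-p) (drop p ns)" by (metis le_add_diff_inverse take_add)
  then show ?thesis by (metis le_add1 sum_list_append)
qed

lemma sum_take_Suc: "p < length ns \<Longrightarrow> sum_list (take (Suc p) ns) = boff ns p + ns!p"
  by (simp add: boff_def take_Suc_conv_app_nth)

lemma boff_bound: assumes "p < length ns" "a < ns!p" shows "boff ns p + a < sum_list (ns::nat list)"
proof -
  have "boff ns p + a < sum_list (take (Suc p) ns)" using assms by (simp add: sum_take_Suc)
  also have "\<dots> \<le> sum_list (take (length ns) ns)" using assms by (intro sum_take_mono) simp
  finally show ?thesis by simp
qed

lemma bidx_eq: assumes "p < length ns" "a < ns!p" shows "bidx ns (boff ns p + a) = p"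
  unfolding bidx_def
proof (rule Least_equality)
  show "boff ns p + a < sum_list (take (Suc p) ns)" using assms by (simp add: sum_take_Suc)
next
  fix y assume *: "boff ns p + a < sum_list (take (Suc y) ns)"
  show "p \<le> y"
  proof (rule ccontr)
    assume "\<not> p \<le> y" then have "Suc y \<le> p" by simp
    then have "sum_list (take (Suc y) ns) \<le> boff ns p" unfolding boff_def by (rule sum_take_mono)
    with * show False by simp
  qed
qed

lemma bdecomp: "i < sum_list ns \<Longrightarrow> \<exists>p a. p < length ns \<and> a < ns!p \<and> i = boff ns p + a"
proof (induction ns arbitrary: i)
  case Nil then show ?case by simp
next
  case (Cons x xs)
  show ?case
  proof (cases "i < x")
    case True then show ?thesis by (intro exI[of _ 0] exI[of _ i]) simp
  next
    case False
    then have "i - x < sum_list xs" using Cons.prems by simp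
    from Cons.IH[OF this] obtain p a where "p < length xs" "a < xs!p" "i - x = boff xs p + a" by blast
    then show ?thesis using False by (intro exI[of _ "Suc p"] exI[of _ a]) simp
  qed
qed

lemma block_mat_dims[simp]:
  "dim_row (block_mat rs cs B) = sum_list rs" "dim_col (block_mat rs cs B) = sum_list cs"
  by (simp_all add: block_mat_def)

lemma block_mat_carrier[simp]: "block_mat rs cs B \<in> carrier_mat (sum_list rs) (sum_list cs)"
  by (simp add: block_mat_def)

lemma block_mat_index:
  assumes "p < length rs" "a < rs!p" "q < length cs" "b < cs!q"
  shows "block_mat rs cs B $$ (boff rs p + a, boff cs q + b) = B p q $$ (a,b)"
  using assms by (simp add: block_mat_def boff_bound bidx_eq)

lemma block_mat_eqI:
  assumes "M \<in> carrier_mat (sum_list rs) (sum_list cs)"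
    "\<And>p q a b. p < length rs \<Longrightarrow> a < rs!p \<Longrightarrow> q < length cs \<Longrightarrow> b < cs!q \<Longrightarrow>
        M $$ (boff rs p + a, boff cs q + b) = B p q $$ (a,b)"
  shows "M = block_mat rs cs B"
proof (rule eq_matI)
  fix i j assume i: "i < dim_row (block_mat rs cs B)" and j: "j < dim_col (block_mat rs cs B)"
  from bdecomp[of i rs] i obtain p a where pa: "p < length rs" "a < rs!p" "i = boff rs p + a" by auto
  from bdecomp[of j cs] j obtain q b where qb: "q < length cs" "b < cs!q" "j = boff cs q + b" by auto
  show "M $$ (i, j) = block_mat rs cs B $$ (i, j)"
    unfolding pa(3) qb(3) using assms(2)[OF pa(1,2) qb(1,2)] block_mat_index[OF pa(1,2) qb(1,2), where B=B] by simp
qed (use assms in auto)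

lemma block_mat_cong:
  assumes "\<And>p q. p < length rs \<Longrightarrow> q < length cs \<Longrightarrow> F p q = G p q"
  shows "block_mat rs cs F = block_mat rs cs G"
  by (rule block_mat_eqI) (auto simp: block_mat_index assms)

lemma block_mat_eq_iff:
  assumes "\<And>p q. p < length rs \<Longrightarrow> q < length cs \<Longrightarrow> F p q \<in> carrier_mat (rs!p) (cs!q)"
    "\<And>p q. p < length rs \<Longrightarrow> q < length cs \<Longrightarrow> G p q \<in> carrier_mat (rs!p) (cs!q)"
  shows "block_mat rs cs F = block_mat rs cs G \<longleftrightarrow>
     (\<forall>p<length rs. \<forall>q<length cs. F p q = G p q)"
proof
  assume eq: "block_mat rs cs F = block_mat rs cs G"
  show "\<forall>p<length rs. \<forall>q<length cs. F p q = G p q"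
  proof (intro allI impI)
    fix p q assume pq: "p < length rs" "q < length cs"
    show "F p q = G p q"
    proof (rule eq_matI)
      fix a b assume "a < dim_row (G p q)" "b < dim_col (G p q)"
      then have ab: "a < rs!p" "b < cs!q" using assms(2)[OF pq] by auto
      show "F p q $$ (a, b) = G p q $$ (a, b)"
        using block_mat_index[OF pq(1) ab(1) pq(2) ab(2), of F] block_mat_index[OF pq(1) ab(1) pq(2) ab(2), of G] eq
        by simp
    qed (use assms(1)[OF pq] assms(2)[OF pq] in auto)
  qed
qed (intro block_mat_cong, auto)

lemma block_mat_zero:
  assumes "\<And>p q. p < length rs \<Longrightarrow> q < length cs \<Longrightarrow> F p q = 0\<^sub>m (rs!p) (cs!q)"
  shows "block_mat rs cs F = 0\<^sub>m (sum_list rs) (sum_list cs)"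
  by (rule sym, rule block_mat_eqI) (auto simp: assms boff_bound)

lemma block_mat_add:
  assumes "\<And>p q. p < length rs \<Longrightarrow> q < length cs \<Longrightarrow> F p q \<in> carrier_mat (rs!p) (cs!q)"
    "\<And>p q. p < length rs \<Longrightarrow> q < length cs \<Longrightarrow> G p q \<in> carrier_mat (rs!p) (cs!q)"
  shows "block_mat rs cs F + block_mat rs cs G = block_mat rs cs (\<lambda>p q. F p q + G p q)"
proof (rule block_mat_eqI)
  fix p q a b assume *: "p < length rs" "a < rs!p" "q < length cs" "b < cs!q"
  then show "(block_mat rs cs F + block_mat rs cs G) $$ (boff rs p + a, boff cs q + b) =
        (F p q + G p q) $$ (a, b)"
    using assms[OF *(1,3)] by (simp add: boff_bound block_mat_index)
qed simp

lemma block_mat_uminus: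
  assumes "\<And>p q. p < length rs \<Longrightarrow> q < length cs \<Longrightarrow> F p q \<in> carrier_mat (rs!p) (cs!q)"
  shows "- block_mat rs cs F = block_mat rs cs (\<lambda>p q. - F p q)"
proof (rule block_mat_eqI)
  fix p q a b assume *: "p < length rs" "a < rs!p" "q < length cs" "b < cs!q"
  then show "(- block_mat rs cs F) $$ (boff rs p + a, boff cs q + b) = (- F p q) $$ (a, b)"
    using assms[OF *(1,3)] by (simp add: boff_bound block_mat_index)
qed simp

lemma block_mat_single:
  assumes "A \<in> carrier_mat nr nc"
  shows "block_mat [nr] [nc] (\<lambda>p q. A) = A"
  by (rule sym, rule block_mat_eqI) (use assms in auto)

section \<open>Finite sums of matrices\<close>

definition msum :: "nat \<Rightarrow> nat \<Rightarrow> (nat \<Rightarrow> 'a::comm_monoid_add mat) \<Rightarrow> nat set \<Rightarrow> 'a mat" where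
  "msum nr nc T S = mat nr nc (\<lambda>(i,j). \<Sum>s\<in>S. T s $$ (i,j))"

lemma msum_dims[simp]: "dim_row (msum nr nc T S) = nr" "dim_col (msum nr nc T S) = nc"
  by (simp_all add: msum_def)

lemma msum_carrier[simp]: "msum nr nc T S \<in> carrier_mat nr nc"
  by (simp add: msum_def)

lemma msum_index: "i < nr \<Longrightarrow> j < nc \<Longrightarrow> msum nr nc T S $$ (i,j) = (\<Sum>s\<in>S. T s $$ (i,j))"
  by (simp add: msum_def)

lemma msum_empty: "msum nr nc T {} = 0\<^sub>m nr nc"
  by (rule eq_matI) (auto simp: msum_def)

lemma msum_insert:
  assumes "finite S" "s \<notin> S" "T s \<in> carrier_mat nr nc"
  shows "msum nr nc T (insert s S) = T s + msum nr nc T S"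
  by (rule eq_matI) (use assms in \<open>auto simp: msum_def\<close>)

lemma msum_singleton:
  assumes "T s \<in> carrier_mat nr nc"
  shows "msum nr nc T {s} = T s"
  using msum_insert[of "{}" s T nr nc] assms by (simp add: msum_empty)

lemma msum_subset:
  assumes "finite S" "S' \<subseteq> S" "\<And>s. s \<in> S - S' \<Longrightarrow> T s = 0\<^sub>m nr nc"
  shows "msum nr nc T S = msum nr nc T S'"
proof (rule eq_matI)
  fix i j assume ij: "i < dim_row (msum nr nc T S')" "j < dim_col (msum nr nc T S')"
  then have ij': "i < nr" "j < nc" by (auto simp: msum_def)
  then have "(\<Sum>s\<in>S. T s $$ (i,j)) = (\<Sum>s\<in>S'. T s $$ (i,j))"
    using assms ij' by (intro sum.mono_neutral_right) auto
  then show "msum nr nc T S $$ (i, j) = msum nr nc T S' $$ (i, j)" using ij' by (simp add: msum_index)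
qed (auto simp: msum_def)

lemma msum_zero:
  assumes "finite S" "\<And>s. s \<in> S \<Longrightarrow> T s = 0\<^sub>m nr nc"
  shows "msum nr nc T S = 0\<^sub>m nr nc"
  using msum_subset[of S "{}" T nr nc] assms by (simp add: msum_empty)

lemma msum_cong:
  assumes "\<And>s. s \<in> S \<Longrightarrow> T s = T' s"
  shows "msum nr nc T S = msum nr nc T' S"
  unfolding msum_def using assms by (intro cong_mat refl) (simp)

lemma msum_3:
  assumes "T 0 \<in> carrier_mat nr nc" "T 1 \<in> carrier_mat nr nc" "T 2 \<in> carrier_mat nr nc"
  shows "msum nr nc T {..<3} = T 0 + (T 1 + T 2)"
proof -
  have "{..<3::nat} = {0,1,2}" by auto
  then show ?thesis using assms by (simp add: msum_insert msum_empty)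
qed

section \<open>Block multiplication\<close>

lemma sum_lessThan_add: "(\<Sum>k<x+(y::nat). h k) = (\<Sum>k<x. h k) + (\<Sum>k<y. h (x + k))"
  by (induction y) (simp_all add: add.assoc)

lemma sum_split_blocks:
  "(\<Sum>k<sum_list cs. h k) = (\<Sum>s<length cs. \<Sum>c<cs!s. h (boff cs s + c))"
proof (induction cs arbitrary: h)
  case Nil then show ?case by simp
next
  case (Cons x xs)
  have "(\<Sum>k<sum_list (x#xs). h k) = (\<Sum>k<x. h k) + (\<Sum>k<sum_list xs. h (x + k))"
    by (simp add: sum_lessThan_add)
  also have "(\<Sum>k<sum_list xs. h (x + k)) = (\<Sum>s<length xs. \<Sum>c<xs!s. h (x + (boff xs s + c)))"
    by (rule Cons.IH)
  also have "(\<Sum>k<x. h k) + (\<Sum>s<length xs. \<Sum>c<xs!s. h (x + (boff xs s + c))) =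
     (\<Sum>s<length (x#xs). \<Sum>c<(x#xs)!s. h (boff (x#xs) s + c))"
    by (simp only: length_Cons sum.lessThan_Suc_shift) (simp add: add.assoc)
  finally show ?case .
qed

lemma block_mat_mult:
  fixes F G :: "nat \<Rightarrow> nat \<Rightarrow> 'a::comm_semiring_0 mat"
  assumes F: "\<And>p s. p < length rs \<Longrightarrow> s < length cs \<Longrightarrow> F p s \<in> carrier_mat (rs!p) (cs!s)"
    and G: "\<And>s q. s < length cs \<Longrightarrow> q < length ts \<Longrightarrow> G s q \<in> carrier_mat (cs!s) (ts!q)"
  shows "block_mat rs cs F * block_mat cs ts G =
     block_mat rs ts (\<lambda>p q. msum (rs!p) (ts!q) (\<lambda>s. F p s * G s q) {..<length cs})"
proof (rule block_mat_eqI)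
  fix p q a b assume *: "p < length rs" "a < rs!p" "q < length ts" "b < ts!q"
  have "(block_mat rs cs F * block_mat cs ts G) $$ (boff rs p + a, boff ts q + b) =
    (\<Sum>k<sum_list cs. block_mat rs cs F $$ (boff rs p + a, k) * block_mat cs ts G $$ (k, boff ts q + b))"
    using * by (simp add: boff_bound scalar_prod_def lessThan_atLeast0)
  also have "\<dots> = (\<Sum>s<length cs. \<Sum>c<cs!s. F p s $$ (a, c) * G s q $$ (c, b))"
    by (subst sum_split_blocks) (simp add: block_mat_index *)
  also have "\<dots> = (\<Sum>s<length cs. (F p s * G s q) $$ (a,b))"
  proof (rule sum.cong[OF refl])
    fix s assume "s \<in> {..<length cs}"
    then have Fc: "F p s \<in> carrier_mat (rs!p) (cs!s)" and Gc: "G s q \<in> carrier_mat (cs!s) (ts!q)"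
      using F G * by auto
    show "(\<Sum>c<cs!s. F p s $$ (a, c) * G s q $$ (c, b)) = (F p s * G s q) $$ (a,b)"
      using Fc Gc * by (simp add: scalar_prod_def lessThan_atLeast0)
  qed
  also have "\<dots> = msum (rs!p) (ts!q) (\<lambda>s. F p s * G s q) {..<length cs} $$ (a,b)"
    using * by (simp add: msum_index)
  finally show "(block_mat rs cs F * block_mat cs ts G) $$ (boff rs p + a, boff ts q + b) =
        msum (rs!p) (ts!q) (\<lambda>s. F p s * G s q) {..<length cs} $$ (a,b)" .
qed (rule mult_carrier_mat[OF block_mat_carrier block_mat_carrier])

lemma mult_block_left:
  fixes A :: "'a::comm_semiring_0 mat"
  assumes "A \<in> carrier_mat nr k" "\<And>q. q < length cs \<Longrightarrow> F 0 q \<in> carrier_mat k (cs!q)"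
  shows "A * block_mat [k] cs F = block_mat [nr] cs (\<lambda>p q. A * F 0 q)"
proof -
  have "A * block_mat [k] cs F = block_mat [nr] [k] (\<lambda>p q. A) * block_mat [k] cs F"
    using block_mat_single[OF assms(1)] by simp
  also have "\<dots> = block_mat [nr] cs (\<lambda>p q. msum ([nr]!p) (cs!q) (\<lambda>s. A * F s q) {..<length [k]})"
    by (rule block_mat_mult) (use assms in auto)
  also have "\<dots> = block_mat [nr] cs (\<lambda>p q. A * F 0 q)"
    by (rule block_mat_cong) (use assms in \<open>auto simp: lessThan_Suc msum_singleton\<close>)
  finally show ?thesis .
qed

lemma mult_block_right:
  fixes B :: "'a::comm_semiring_0 mat"
  assumes "B \<in> carrier_mat k nc" "\<And>p. p < length rs \<Longrightarrow> F p 0 \<in> carrier_mat (rs!p) k"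
  shows "block_mat rs [k] F * B = block_mat rs [nc] (\<lambda>p q. F p 0 * B)"
proof -
  have "block_mat rs [k] F * B = block_mat rs [k] F * block_mat [k] [nc] (\<lambda>p q. B)"
    using block_mat_single[OF assms(1)] by simp
  also have "\<dots> = block_mat rs [nc] (\<lambda>p q. msum (rs!p) ([nc]!q) (\<lambda>s. F p s * B) {..<length [k]})"
    by (rule block_mat_mult) (use assms in auto)
  also have "\<dots> = block_mat rs [nc] (\<lambda>p q. F p 0 * B)"
    by (rule block_mat_cong) (use assms in \<open>auto simp: lessThan_Suc intro!: msum_singleton mult_carrier_mat\<close>)
  finally show ?thesis .
qed

lemma uminus_zero_mat[simp]: "- 0\<^sub>m nr nc = (0\<^sub>m nr nc :: 'a::group_add mat)"
  by (rule eq_matI) auto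

lemma less3_cases: "(p::nat) < 3 \<Longrightarrow> p = 0 \<or> p = 1 \<or> p = 2" by auto
lemma all_less3: "(\<forall>p<(3::nat). P p) \<longleftrightarrow> P 0 \<and> P 1 \<and> P 2"
  by (auto dest: less3_cases)

lemma stot_sq:
  fixes X :: "'a::comm_ring_1 scx"
  assumes c: "dm X \<in> carrier_mat m m" "vm X \<in> carrier_mat m m" "d1m X \<in> carrier_mat r m"
    "d2m X \<in> carrier_mat m r" "rm X \<in> carrier_mat r r" and l: "length (cdeg X) = m" "length (rdeg X) = r"
  shows "stot X * stot X = 0\<^sub>m (m+m+r) (m+m+r) \<longleftrightarrow>
    (dm X * dm X = 0\<^sub>m m m \<and> vm X * dm X + ((- dm X) * vm X + d2m X * d1m X) = 0\<^sub>m m m \<and>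
     (- dm X) * d2m X + d2m X * rm X = 0\<^sub>m m r \<and> d1m X * dm X + rm X * d1m X = 0\<^sub>m r m \<and>
     rm X * rm X = 0\<^sub>m r r)"
proof -
  define S where "S = (\<lambda>p q. [[dm X, 0\<^sub>m m m, 0\<^sub>m m r],
                [vm X, - dm X, d2m X],
                [d1m X, 0\<^sub>m r m, rm X]] ! p ! q)"
  have st: "stot X = block_mat [m,m,r] [m,m,r] S" unfolding stot_def S_def l by simp
  have Sc: "S p q \<in> carrier_mat ([m,m,r]!p) ([m,m,r]!q)" if "p < length [m,m,r]" "q < length [m,m,r]" for p q
  proof -
    have "p < 3" "q < 3" using that by auto
    then show ?thesis using c by (auto simp: S_def dest!: less3_cases)
  qed
  have z: "(0\<^sub>m (m+m+r) (m+m+r) :: 'a mat) = block_mat [m,m,r] [m,m,r] (\<lambda>p q. 0\<^sub>m ([m,m,r]!p) ([m,m,r]!q))"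
  proof -
    have "block_mat [m,m,r] [m,m,r] (\<lambda>p q. (0\<^sub>m ([m,m,r]!p) ([m,m,r]!q) :: 'a mat)) = 0\<^sub>m (sum_list [m,m,r]) (sum_list [m,m,r])"
      by (rule block_mat_zero) simp
    then show ?thesis by (simp add: add.assoc)
  qed
  have l3: "length [m,m,r] = 3" by simp
  have prod: "stot X * stot X = block_mat [m,m,r] [m,m,r] (\<lambda>p q. msum ([m,m,r]!p) ([m,m,r]!q) (\<lambda>s. S p s * S s q) {..<length [m,m,r]})"
    unfolding st by (rule block_mat_mult) (use Sc in auto)
  have "stot X * stot X = 0\<^sub>m (m+m+r) (m+m+r) \<longleftrightarrow>
     (\<forall>p<length [m,m,r]. \<forall>q<length [m,m,r]. msum ([m,m,r]!p) ([m,m,r]!q) (\<lambda>s. S p s * S s q) {..<length [m,m,r]} = 0\<^sub>m ([m,m,r]!p) ([m,m,r]!q))"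
    unfolding z prod by (rule block_mat_eq_iff) (use Sc in auto)
  also have "\<dots> \<longleftrightarrow>
     (\<forall>p<3. \<forall>q<3. msum ([m,m,r]!p) ([m,m,r]!q) (\<lambda>s. S p s * S s q) {..<3} = 0\<^sub>m ([m,m,r]!p) ([m,m,r]!q))"
    unfolding l3 ..
  also have "\<dots> \<longleftrightarrow> (dm X * dm X = 0\<^sub>m m m \<and> vm X * dm X + ((- dm X) * vm X + d2m X * d1m X) = 0\<^sub>m m m \<and>
     (- dm X) * d2m X + d2m X * rm X = 0\<^sub>m m r \<and> d1m X * dm X + rm X * d1m X = 0\<^sub>m r m \<and>
     rm X * rm X = 0\<^sub>m r r)"
    unfolding all_less3 using c by (simp add: msum_3 S_def) blast
  finally show ?thesis .
qed

lemma smor_eq: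
  fixes X Y :: "'a::comm_ring_1 scx" and f :: "'a smor"
  assumes c: "dm X \<in> carrier_mat m m" "vm X \<in> carrier_mat m m" "d1m X \<in> carrier_mat r m"
    "d2m X \<in> carrier_mat m r" "rm X \<in> carrier_mat r r" and l: "length (cdeg X) = m" "length (rdeg X) = r"
  and c': "dm Y \<in> carrier_mat m' m'" "vm Y \<in> carrier_mat m' m'" "d1m Y \<in> carrier_mat r' m'"
    "d2m Y \<in> carrier_mat m' r'" "rm Y \<in> carrier_mat r' r'" and l': "length (cdeg Y) = m'" "length (rdeg Y) = r'"
  and cf: "lam f \<in> carrier_mat m' m" "mu f \<in> carrier_mat m' m" "D2 f \<in> carrier_mat m' r"
    "D1 f \<in> carrier_mat r' m" "rho f \<in> carrier_mat r' r"
  shows "stot Y * mtot X Y f = mtot X Y f * stot X \<longleftrightarrow>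
    (dm Y * lam f = lam f * dm X \<and>
     vm Y * lam f + ((- dm Y) * mu f + d2m Y * D1 f) = mu f * dm X + (lam f * vm X + D2 f * d1m X) \<and>
     (- dm Y) * lam f = lam f * (- dm X) \<and>
     (- dm Y) * D2 f + d2m Y * rho f = lam f * d2m X + D2 f * rm X \<and>
     d1m Y * lam f + rm Y * D1 f = D1 f * dm X + rho f * d1m X \<and>
     rm Y * rho f = rho f * rm X)"
proof -
  define S where "S = (\<lambda>p q. [[dm X, 0\<^sub>m m m, 0\<^sub>m m r],
                [vm X, - dm X, d2m X],
                [d1m X, 0\<^sub>m r m, rm X]] ! p ! q)"
  define S' where "S' = (\<lambda>p q. [[dm Y, 0\<^sub>m m' m', 0\<^sub>m m' r'],
                [vm Y, - dm Y, d2m Y],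
                [d1m Y, 0\<^sub>m r' m', rm Y]] ! p ! q)"
  define T where "T = (\<lambda>p q. [[lam f, 0\<^sub>m m' m, 0\<^sub>m m' r],
                [mu f, lam f, D2 f],
                [D1 f, 0\<^sub>m r' m, rho f]] ! p ! q)"
  have st: "stot X = block_mat [m,m,r] [m,m,r] S" unfolding stot_def S_def l by simp
  have st': "stot Y = block_mat [m',m',r'] [m',m',r'] S'" unfolding stot_def S'_def l' by simp
  have mt: "mtot X Y f = block_mat [m',m',r'] [m,m,r] T" unfolding mtot_def T_def l l' by simp
  have Sc: "S p q \<in> carrier_mat ([m,m,r]!p) ([m,m,r]!q)" if "p < length [m,m,r]" "q < length [m,m,r]" for p q
  proof -
    have "p < 3" "q < 3" using that by auto
    then show ?thesis using c by (auto simp: S_def dest!: less3_cases)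
  qed
  have Sc': "S' p q \<in> carrier_mat ([m',m',r']!p) ([m',m',r']!q)" if "p < length [m',m',r']" "q < length [m',m',r']" for p q
  proof -
    have "p < 3" "q < 3" using that by auto
    then show ?thesis using c' by (auto simp: S'_def dest!: less3_cases)
  qed
  have Tc: "T p q \<in> carrier_mat ([m',m',r']!p) ([m,m,r]!q)" if "p < length [m',m',r']" "q < length [m,m,r]" for p q
  proof -
    have "p < 3" "q < 3" using that by auto
    then show ?thesis using cf by (auto simp: T_def dest!: less3_cases)
  qed
  have l3: "length [m,m,r] = 3" "length [m',m',r'] = 3" by simp_all
  have p1: "stot Y * mtot X Y f = block_mat [m',m',r'] [m,m,r] (\<lambda>p q. msum ([m',m',r']!p) ([m,m,r]!q) (\<lambda>s. S' p s * T s q) {..<length [m',m',r']})"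
    unfolding st' mt by (rule block_mat_mult) (use Sc' Tc in auto)
  have p2: "mtot X Y f * stot X = block_mat [m',m',r'] [m,m,r] (\<lambda>p q. msum ([m',m',r']!p) ([m,m,r]!q) (\<lambda>s. T p s * S s q) {..<length [m,m,r]})"
    unfolding st mt by (rule block_mat_mult) (use Sc Tc in auto)
  have "stot Y * mtot X Y f = mtot X Y f * stot X \<longleftrightarrow>
     (\<forall>p<length [m',m',r']. \<forall>q<length [m,m,r]. msum ([m',m',r']!p) ([m,m,r]!q) (\<lambda>s. S' p s * T s q) {..<length [m',m',r']} =
        msum ([m',m',r']!p) ([m,m,r]!q) (\<lambda>s. T p s * S s q) {..<length [m,m,r]})"
    unfolding p1 p2 by (rule block_mat_eq_iff) auto
  also have "\<dots> \<longleftrightarrow>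
     (\<forall>p<3. \<forall>q<3. msum ([m',m',r']!p) ([m,m,r]!q) (\<lambda>s. S' p s * T s q) {..<3} =
        msum ([m',m',r']!p) ([m,m,r]!q) (\<lambda>s. T p s * S s q) {..<3})"
    unfolding l3 ..
  also have "\<dots> \<longleftrightarrow> (dm Y * lam f = lam f * dm X \<and>
     vm Y * lam f + ((- dm Y) * mu f + d2m Y * D1 f) = mu f * dm X + (lam f * vm X + D2 f * d1m X) \<and>
     (- dm Y) * lam f = lam f * (- dm X) \<and>
     (- dm Y) * D2 f + d2m Y * rho f = lam f * d2m X + D2 f * rm X \<and>
     d1m Y * lam f + rm Y * D1 f = D1 f * dm X + rho f * d1m X \<and>
     rm Y * rho f = rho f * rm X)"
    unfolding all_less3 using c c' cf by (simp add: msum_3 S_def S'_def T_def)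
  finally show ?thesis .
qed

section \<open>Graded maps\<close>

lemma graded_carrier: "graded_map dv dw k M \<Longrightarrow> M \<in> carrier_mat (length dw) (length dv)"
  by (simp add: graded_map_def)

lemma graded_shift:
  "graded_map (shift s dv) (shift t dw) k M \<longleftrightarrow> graded_map dv dw (k + s - t) M"
  unfolding graded_map_def shift_def by (auto simp: algebra_simps)

lemma graded_shift_tgt:
  "graded_map dv (shift t dw) k M \<longleftrightarrow> graded_map dv dw (k - t) M"
  using graded_shift[of 0 dv t dw k M] by (simp add: shift_def)

lemma graded_shift_src:
  "graded_map (shift s dv) dw k M \<longleftrightarrow> graded_map dv dw (k + s) M"
  using graded_shift[of s dv 0 dw k M] by (simp add: shift_def)

lemma graded_mult:
  fixes A B :: "'a::comm_semiring_0 mat"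
  assumes A: "graded_map dv dw k A" and B: "graded_map du dv l B" and kl: "kl = k + l"
  shows "graded_map du dw kl (A * B)"
  unfolding graded_map_def
proof (intro conjI allI impI)
  show "A * B \<in> carrier_mat (length dw) (length du)"
    using graded_carrier[OF A] graded_carrier[OF B] by auto
  fix i j assume i: "i < length dw" and j: "j < length du" and nz: "(A * B) $$ (i, j) \<noteq> 0"
  have "(A * B) $$ (i, j) = (\<Sum>c\<in>{0..<length dv}. A $$ (i,c) * B $$ (c,j))"
    using graded_carrier[OF A] graded_carrier[OF B] i j by (auto simp: scalar_prod_def)
  with nz have "\<exists>c\<in>{0..<length dv}. A $$ (i,c) * B $$ (c,j) \<noteq> 0"
    using sum.neutral by force
  then obtain c where c: "c < length dv" "A $$ (i,c) * B $$ (c,j) \<noteq> 0" by auto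
  then have "A $$ (i,c) \<noteq> 0" "B $$ (c,j) \<noteq> 0" by auto
  then show "dw ! i = du ! j + kl" using A B i j c(1) kl unfolding graded_map_def by auto
qed

lemma graded_add:
  fixes A B :: "'a::monoid_add mat"
  assumes A: "graded_map dv dw k A" and B: "graded_map dv dw k B"
  shows "graded_map dv dw k (A + B)"
  unfolding graded_map_def
proof (intro conjI allI impI)
  have Ac: "A \<in> carrier_mat (length dw) (length dv)" and Bc: "B \<in> carrier_mat (length dw) (length dv)"
    using A B by (simp_all add: graded_map_def)
  then show "A + B \<in> carrier_mat (length dw) (length dv)" by simp
  fix i j assume i: "i < length dw" and j: "j < length dv" and nz: "(A + B) $$ (i, j) \<noteq> 0"
  then have "A $$ (i,j) \<noteq> 0 \<or> B $$ (i,j) \<noteq> 0" using Ac Bc by auto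
  then show "dw ! i = dv ! j + k" using A B i j unfolding graded_map_def by blast
qed

lemma graded_uminus:
  fixes A :: "'a::group_add mat"
  assumes A: "graded_map dv dw k A"
  shows "graded_map dv dw k (- A)"
  unfolding graded_map_def
proof (intro conjI allI impI)
  have Ac: "A \<in> carrier_mat (length dw) (length dv)"
    using A by (simp_all add: graded_map_def)
  then show "- A \<in> carrier_mat (length dw) (length dv)" by simp
  fix i j assume i: "i < length dw" and j: "j < length dv" and nz: "(- A) $$ (i, j) \<noteq> 0"
  then have "A $$ (i,j) \<noteq> 0" using Ac by auto
  then show "dw ! i = dv ! j + k" using A i j unfolding graded_map_def by blast
qed

lemma graded_zero: "graded_map dv dw k (0\<^sub>m (length dw) (length dv))"
  unfolding graded_map_def by simp

lemma graded_one: "graded_map dv dv 0 (1\<^sub>m (length dv) :: 'a::semiring_1 mat)"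
  unfolding graded_map_def by simp

lemma graded_pow:
  fixes A :: "'a::comm_semiring_1 mat"
  assumes A: "graded_map dv dv k A"
  shows "graded_map dv dv (int j * k) (A ^\<^sub>m j)"
proof (induction j)
  case 0
  have "dim_row A = length dv" using graded_carrier[OF A] by auto
  then show ?case using graded_one[of dv] by simp
next
  case (Suc j)
  show ?case by (simp, rule graded_mult[OF Suc A]) (simp add: algebra_simps)
qed

lemma graded_odd_zero:
  assumes M: "graded_map dv dw k M" and ev: "\<forall>e\<in>set dv. even e" "\<forall>e\<in>set dw. even e" and od: "odd k"
  shows "M = 0\<^sub>m (length dw) (length dv)"
proof (rule eq_matI)
  fix i j assume i: "i < dim_row (0\<^sub>m (length dw) (length dv))" and j: "j < dim_col (0\<^sub>m (length dw) (length dv))"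
  show "M $$ (i,j) = 0\<^sub>m (length dw) (length dv) $$ (i,j)"
  proof (rule ccontr)
    assume "M $$ (i,j) \<noteq> 0\<^sub>m (length dw) (length dv) $$ (i,j)"
    then have "M $$ (i,j) \<noteq> 0" using i j by simp
    then have "dw ! i = dv ! j + k" using M i j unfolding graded_map_def by auto
    moreover have "even (dw ! i)" "even (dv ! j)" using ev i j by auto
    ultimately show False using od by simp
  qed
qed (use graded_carrier[OF M] in auto)

lemma graded_zero': "nr = length dw \<Longrightarrow> nc = length dv \<Longrightarrow> graded_map dv dw k (0\<^sub>m nr nc)"
  using graded_zero by blast

lemma graded_deg: "graded_map dv dw k M \<Longrightarrow> k = k' \<Longrightarrow> graded_map dv dw k' M"
  by simp

lemma concat_index:
  assumes "p < length Es" "a < length (Es!p)"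
  shows "concat Es ! (boff (map length Es) p + a) = Es ! p ! a"
  using assms
proof (induction Es arbitrary: p)
  case Nil then show ?case by simp
next
  case (Cons E Es)
  then show ?case by (cases p) (auto simp: nth_append)
qed

lemma graded_block:
  assumes "\<And>p q. p < length Es \<Longrightarrow> q < length Ds \<Longrightarrow> graded_map (Ds!q) (Es!p) k (F p q)"
  shows "graded_map (concat Ds) (concat Es) k (block_mat (map length Es) (map length Ds) F)"
  unfolding graded_map_def
proof (intro conjI allI impI)
  show "block_mat (map length Es) (map length Ds) F \<in> carrier_mat (length (concat Es)) (length (concat Ds))"
    using block_mat_carrier[of "map length Es" "map length Ds" F] by (simp add: length_concat)
  fix i j assume i: "i < length (concat Es)" and j: "j < length (concat Ds)"
    and nz: "block_mat (map length Es) (map length Ds) F $$ (i, j) \<noteq> 0"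
  from bdecomp[of i "map length Es"] i obtain p a where pa: "p < length Es" "a < length (Es!p)"
    "i = boff (map length Es) p + a" by (auto simp: length_concat)
  from bdecomp[of j "map length Ds"] j obtain q b where qb: "q < length Ds" "b < length (Ds!q)"
    "j = boff (map length Ds) q + b" by (auto simp: length_concat)
  have "F p q $$ (a,b) \<noteq> 0" using nz block_mat_index[of p "map length Es" a q "map length Ds" b F] pa qb by simp
  then have "Es!p!a = Ds!q!b + k" using assms[OF pa(1) qb(1)] pa qb unfolding graded_map_def by auto
  then show "concat Es ! i = concat Ds ! j + k" using pa qb concat_index by metis
qed

lemma pow_mat_Suc_left:
  assumes "(A::'a::semiring_1 mat) \<in> carrier_mat n n"
  shows "A ^\<^sub>m Suc j = A * A ^\<^sub>m j"
proof (induction j)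
  case 0 then show ?case using assms by simp
next
  case (Suc j)
  have "A ^\<^sub>m Suc (Suc j) = (A * A ^\<^sub>m j) * A" using Suc by simp
  also have "\<dots> = A * (A ^\<^sub>m j * A)" by (rule assoc_mult_mat) (use assms in auto)
  finally show ?case by simp
qed

lemma add_left_comm_mat:
  "(A :: 'a :: comm_monoid_add mat) \<in> carrier_mat nr nc \<Longrightarrow> B \<in> carrier_mat nr nc \<Longrightarrow> C \<in> carrier_mat nr nc
  \<Longrightarrow> A + (B + C) = B + (A + C)"
  by (intro eq_matI) (auto simp: ac_simps)

lemma neg_cancel_mat:
  "(A :: 'a :: ab_group_add mat) \<in> carrier_mat nr nc \<Longrightarrow> B \<in> carrier_mat nr nc
  \<Longrightarrow> A + (- A + B) = B"  "(A :: 'a :: ab_group_add mat) \<in> carrier_mat nr nc \<Longrightarrow> B \<in> carrier_mat nr nc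
  \<Longrightarrow> - A + (A + B) = B"
  by (intro eq_matI; auto)+

lemma msum_mult_left:
  fixes A :: "'a::comm_semiring_0 mat"
  assumes A: "A \<in> carrier_mat nr k" and T: "\<And>s. s \<in> S \<Longrightarrow> T s \<in> carrier_mat k nc" and S: "finite S"
  shows "A * msum k nc T S = msum nr nc (\<lambda>s. A * T s) S"
proof (rule eq_matI)
  fix i j assume ij: "i < dim_row (msum nr nc (\<lambda>s. A * T s) S)" "j < dim_col (msum nr nc (\<lambda>s. A * T s) S)"
  then have i: "i < nr" and j: "j < nc" by auto
  have "(A * msum k nc T S) $$ (i,j) = (\<Sum>c<k. A $$ (i,c) * (\<Sum>s\<in>S. T s $$ (c,j)))"
    using A i j by (simp add: scalar_prod_def msum_index lessThan_atLeast0)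
  also have "\<dots> = (\<Sum>s\<in>S. \<Sum>c<k. A $$ (i,c) * T s $$ (c,j))"
    by (simp add: sum_distrib_left sum.swap[of _ S])
  also have "\<dots> = (\<Sum>s\<in>S. (A * T s) $$ (i,j))"
  proof (rule sum.cong[OF refl])
    fix s assume "s \<in> S"
    then have Ts: "T s \<in> carrier_mat k nc" using T by auto
    show "(\<Sum>c<k. A $$ (i,c) * T s $$ (c,j)) = (A * T s) $$ (i,j)"
      using A Ts i j by (simp add: scalar_prod_def lessThan_atLeast0)
  qed
  also have "\<dots> = msum nr nc (\<lambda>s. A * T s) S $$ (i,j)"
    using i j by (simp add: msum_index)
  finally show "(A * msum k nc T S) $$ (i,j) = msum nr nc (\<lambda>s. A * T s) S $$ (i,j)" .
qed (use A in auto)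

lemma msum_lessThan_Suc:
  assumes "T i \<in> carrier_mat nr nc"
  shows "msum nr nc T {..<Suc i} = T i + msum nr nc T {..<i}"
  using assms by (simp add: lessThan_Suc msum_insert)

lemma msum_shift:
  "msum nr nc T {..<Suc i} = msum nr nc (\<lambda>_. T 0) {0} + msum nr nc (\<lambda>j. T (Suc j)) {..<i}"
  by (rule eq_matI) (simp_all add: msum_index sum.lessThan_Suc_shift msum_def del: sum.lessThan_Suc)

lemma foldr_msum:
  assumes "distinct xs" "\<And>s. s \<in> set xs \<Longrightarrow> T s \<in> carrier_mat nr nc"
  shows "foldr (\<lambda>j acc. T j + acc) xs (0\<^sub>m nr nc) = msum nr nc T (set xs)"
  using assms
proof (induction xs)
  case Nil then show ?case by (simp add: msum_empty)
next
  case (Cons x xs)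
  then show ?case by (simp add: msum_insert)
qed

lemma assoc_mult_mat':
  "dim_col A = dim_row B \<Longrightarrow> dim_col B = dim_row C \<Longrightarrow> (A * B) * C = A * (B * (C::'a::semiring_0 mat))"
  by (rule assoc_mult_mat[of A "dim_row A" "dim_col A" B "dim_col B" C "dim_col C"]) (auto intro!: carrier_matI)

lemma mult_add_distrib_mat':
  "dim_col A = dim_row B \<Longrightarrow> dim_row C = dim_row B \<Longrightarrow> dim_col C = dim_col B \<Longrightarrow>
   A * (B + C) = A * B + A * (C::'a::semiring_0 mat)"
  by (rule mult_add_distrib_mat[of A "dim_row A" "dim_col A" B "dim_col B"]) (auto intro!: carrier_matI)

lemma add_mult_distrib_mat':
  "dim_row A = dim_row B \<Longrightarrow> dim_col A = dim_col B \<Longrightarrow> dim_col B = dim_row C \<Longrightarrow>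
   (A + B) * C = A * C + B * (C::'a::semiring_0 mat)"
  by (rule add_mult_distrib_mat[of A "dim_row A" "dim_col A" B C "dim_col C"]) (auto intro!: carrier_matI)

lemma left_add_zero_mat'': "dim_row A = nr \<Longrightarrow> dim_col A = nc \<Longrightarrow> 0\<^sub>m nr nc + A = (A::'a::monoid_add mat)"
  by (rule left_add_zero_mat) (auto intro!: carrier_matI)

lemma right_add_zero_mat'': "dim_row A = nr \<Longrightarrow> dim_col A = nc \<Longrightarrow> A + 0\<^sub>m nr nc = (A::'a::monoid_add mat)"
  by (rule right_add_zero_mat) (auto intro!: carrier_matI)

lemmas msimps = assoc_mult_mat' mult_add_distrib_mat' add_mult_distrib_mat' left_add_zero_mat'' right_add_zero_mat''

lemma mat_solve1:
  fixes A B C :: "'a::ab_group_add mat"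
  assumes "A \<in> carrier_mat nr nc" "B \<in> carrier_mat nr nc" "C \<in> carrier_mat nr nc"
    "A + (- B + C) = 0\<^sub>m nr nc"
  shows "B = A + C"
proof (rule eq_matI)
  fix i j assume "i < dim_row (A + C)" "j < dim_col (A + C)"
  then have ij: "i < nr" "j < nc" using assms by auto
  have "(A + (- B + C)) $$ (i,j) = 0" using assms(4) ij by simp
  then have e: "A $$ (i,j) + (- B $$ (i,j) + C $$ (i,j)) = 0" using assms(1-3) ij by simp
  have "(A $$ (i,j) + C $$ (i,j)) - B $$ (i,j) = 0" using e by (simp add: algebra_simps)
  then have "B $$ (i,j) = A $$ (i,j) + C $$ (i,j)" by simp
  then show "B $$ (i,j) = (A + C) $$ (i,j)" using assms(1-3) ij by simp
qed (use assms in auto)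

lemma mat_solve2:
  fixes A B C D :: "'a::ab_group_add mat"
  assumes "A \<in> carrier_mat nr nc" "B \<in> carrier_mat nr nc" "C \<in> carrier_mat nr nc" "D \<in> carrier_mat nr nc"
    "A + (- B + C) = D"
  shows "B = A + (C + - D)"
proof (rule eq_matI)
  fix i j assume "i < dim_row (A + (C + - D))" "j < dim_col (A + (C + - D))"
  then have ij: "i < nr" "j < nc" using assms by auto
  have "(A + (- B + C)) $$ (i,j) = D $$ (i,j)" using assms(5) ij by simp
  then have e: "A $$ (i,j) + (- B $$ (i,j) + C $$ (i,j)) = D $$ (i,j)" using assms(1-4) ij by simp
  have "(A $$ (i,j) + (C $$ (i,j) + - D $$ (i,j))) - B $$ (i,j) = 0" using e by (simp add: algebra_simps)
  then have "B $$ (i,j) = A $$ (i,j) + (C $$ (i,j) + - D $$ (i,j))" by simp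
  then show "B $$ (i,j) = (A + (C + - D)) $$ (i,j)" using assms(1-4) ij by simp
qed (use assms in auto)

lemma mat_solve3:
  fixes A B :: "'a::ab_group_add mat"
  assumes "A \<in> carrier_mat nr nc" "B \<in> carrier_mat nr nc" "A + B = 0\<^sub>m nr nc"
  shows "A = - B"
proof (rule eq_matI)
  fix i j assume "i < dim_row (- B)" "j < dim_col (- B)"
  then have ij: "i < nr" "j < nc" using assms by auto
  have "(A + B) $$ (i,j) = 0" using assms(3) ij by simp
  then have "A $$ (i,j) + B $$ (i,j) = 0" using assms(1-2) ij by simp
  then have "A $$ (i,j) = - B $$ (i,j)" by (simp add: eq_neg_iff_add_eq_0)
  then show "A $$ (i,j) = (- B) $$ (i,j)" using assms(1-2) ij by simp
qed (use assms in auto)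

lemma msum_single_lt:
  assumes "\<And>s. s < N \<Longrightarrow> s \<noteq> s0 \<Longrightarrow> T s = 0\<^sub>m nr nc" "s0 < N" "T s0 \<in> carrier_mat nr nc"
  shows "msum nr nc T {..<N} = T s0"
proof -
  have "msum nr nc T {..<N} = msum nr nc T {s0}"
    by (rule msum_subset) (use assms in auto)
  then show ?thesis using msum_singleton[of T s0 nr nc] assms(3) by simp
qed

lemma msum_two_lt:
  assumes "\<And>s. s < N \<Longrightarrow> s \<noteq> s0 \<Longrightarrow> s \<noteq> s1 \<Longrightarrow> T s = 0\<^sub>m nr nc" "s0 < N" "s1 < N" "s0 \<noteq> s1"
    "T s0 \<in> carrier_mat nr nc" "T s1 \<in> carrier_mat nr nc"
  shows "msum nr nc T {..<N} = T s0 + T s1"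
proof -
  have "msum nr nc T {..<N} = msum nr nc T {s0, s1}"
    by (rule msum_subset) (use assms in auto)
  then show ?thesis using assms(4-6) by (simp add: msum_insert msum_empty)
qed

lemma mat_eqI_entries:
  assumes "A \<in> carrier_mat nr nc" "B \<in> carrier_mat nr nc" "\<And>i j. i < nr \<Longrightarrow> j < nc \<Longrightarrow> A $$ (i,j) = B $$ (i,j)"
  shows "A = B"
  by (rule eq_matI) (use assms in auto)

lemma mat_entry_eq: "A = B \<Longrightarrow> A $$ ij = B $$ ij" by simp

locale hs =
  fixes X Y :: "'a::comm_ring_1 scx" and f :: "'a smor" and n :: nat and k :: int
  assumes hm: "height_mor n k X Y f" and n1: "1 \<le> n"
begin

abbreviation "m \<equiv> length (cdeg X)"
abbreviation "r \<equiv> length (rdeg X)"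
abbreviation "m' \<equiv> length (cdeg Y)"
abbreviation "r' \<equiv> length (rdeg Y)"

lemma scxX: "is_scx X" and scxY: "is_scx Y" and evX: "\<forall>e\<in>set (rdeg X). even e"
  and evY: "\<forall>e\<in>set (rdeg Y). even e" and smf: "is_smor k X Y f" and evk: "even k"
  and tauz: "\<And>j. j < n \<Longrightarrow> tau X Y f j = 0\<^sub>m r' r"
  using hm by (auto simp: height_mor_def r_perfect_def)

lemma gd: "graded_map (cdeg X) (cdeg X) (-1) (dm X)"
  and gv: "graded_map (cdeg X) (cdeg X) (-2) (vm X)"
  and ge2: "graded_map (rdeg X) (cdeg X) (-2) (d2m X)"
  and ge1: "graded_map (cdeg X) (rdeg X) (-1) (d1m X)"
  and grm: "graded_map (rdeg X) (rdeg X) (-1) (rm X)"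
  using scxX by (auto simp: is_scx_def graded_shift_tgt)

lemma gd': "graded_map (cdeg Y) (cdeg Y) (-1) (dm Y)"
  and gv': "graded_map (cdeg Y) (cdeg Y) (-2) (vm Y)"
  and ge2': "graded_map (rdeg Y) (cdeg Y) (-2) (d2m Y)"
  and ge1': "graded_map (cdeg Y) (rdeg Y) (-1) (d1m Y)"
  and grm': "graded_map (rdeg Y) (rdeg Y) (-1) (rm Y)"
  using scxY by (auto simp: is_scx_def graded_shift_tgt)

lemma gL: "graded_map (cdeg X) (cdeg Y) k (lam f)"
  and gU: "graded_map (cdeg X) (cdeg Y) (k - 1) (mu f)"
  and gF2: "graded_map (rdeg X) (cdeg Y) (k - 1) (D2 f)"
  and gF1: "graded_map (cdeg X) (rdeg Y) k (D1 f)"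
  and grho: "graded_map (rdeg X) (rdeg Y) k (rho f)"
  using smf by (auto simp: is_smor_def graded_shift_tgt)

lemma carr[simp]:
  "dm X \<in> carrier_mat m m" "vm X \<in> carrier_mat m m" "d2m X \<in> carrier_mat m r"
  "d1m X \<in> carrier_mat r m" "rm X \<in> carrier_mat r r"
  "dm Y \<in> carrier_mat m' m'" "vm Y \<in> carrier_mat m' m'" "d2m Y \<in> carrier_mat m' r'"
  "d1m Y \<in> carrier_mat r' m'" "rm Y \<in> carrier_mat r' r'"
  "lam f \<in> carrier_mat m' m" "mu f \<in> carrier_mat m' m" "D2 f \<in> carrier_mat m' r"
  "D1 f \<in> carrier_mat r' m" "rho f \<in> carrier_mat r' r"
  using graded_carrier[OF gd] graded_carrier[OF gv] graded_carrier[OF ge2] graded_carrier[OF ge1]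
    graded_carrier[OF grm] graded_carrier[OF gd'] graded_carrier[OF gv'] graded_carrier[OF ge2']
    graded_carrier[OF ge1'] graded_carrier[OF grm'] graded_carrier[OF gL] graded_carrier[OF gU]
    graded_carrier[OF gF2] graded_carrier[OF gF1] graded_carrier[OF grho] by auto

lemma dims[simp]:
  "dim_row (dm X) = m" "dim_col (dm X) = m" "dim_row (vm X) = m" "dim_col (vm X) = m"
  "dim_row (d2m X) = m" "dim_col (d2m X) = r" "dim_row (d1m X) = r" "dim_col (d1m X) = m"
  "dim_row (rm X) = r" "dim_col (rm X) = r"
  "dim_row (dm Y) = m'" "dim_col (dm Y) = m'" "dim_row (vm Y) = m'" "dim_col (vm Y) = m'"
  "dim_row (d2m Y) = m'" "dim_col (d2m Y) = r'" "dim_row (d1m Y) = r'" "dim_col (d1m Y) = m'"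
  "dim_row (rm Y) = r'" "dim_col (rm Y) = r'"
  "dim_row (lam f) = m'" "dim_col (lam f) = m" "dim_row (mu f) = m'" "dim_col (mu f) = m"
  "dim_row (D2 f) = m'" "dim_col (D2 f) = r" "dim_row (D1 f) = r'" "dim_col (D1 f) = m"
  "dim_row (rho f) = r'" "dim_col (rho f) = r"
  using carr by (meson carrier_matD)+

lemma rmX: "rm X = 0\<^sub>m r r"
  by (rule graded_odd_zero[OF grm evX evX]) simp

lemma rmY: "rm Y = 0\<^sub>m r' r'"
  by (rule graded_odd_zero[OF grm' evY evY]) simp

lemma rho0: "rho f = 0\<^sub>m r' r"
  using tauz[of 0] n1 by simp

lemma idX: "dm X * dm X = 0\<^sub>m m m" "vm X * dm X + ((- dm X) * vm X + d2m X * d1m X) = 0\<^sub>m m m"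
  "dm X * d2m X = 0\<^sub>m m r" "d1m X * dm X = 0\<^sub>m r m"
proof -
  have "stot X * stot X = 0\<^sub>m (m+m+r) (m+m+r)" using scxX by (simp add: is_scx_def tdeg_def shift_def add.assoc)
  then have *: "dm X * dm X = 0\<^sub>m m m \<and> vm X * dm X + ((- dm X) * vm X + d2m X * d1m X) = 0\<^sub>m m m \<and>
     (- dm X) * d2m X + d2m X * rm X = 0\<^sub>m m r \<and> d1m X * dm X + rm X * d1m X = 0\<^sub>m r m \<and>
     rm X * rm X = 0\<^sub>m r r"
    by (subst (asm) stot_sq) auto
  then show "dm X * dm X = 0\<^sub>m m m" "vm X * dm X + ((- dm X) * vm X + d2m X * d1m X) = 0\<^sub>m m m"
    "d1m X * dm X = 0\<^sub>m r m" by (simp_all add: rmX mult_carrier_iff)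
  from * have "- (dm X * d2m X) = 0\<^sub>m m r" by (simp add: rmX mult_carrier_iff)
  then show "dm X * d2m X = 0\<^sub>m m r" by (metis uminus_uminus_mat uminus_zero_mat)
qed

lemma idY: "dm Y * dm Y = 0\<^sub>m m' m'" "vm Y * dm Y + ((- dm Y) * vm Y + d2m Y * d1m Y) = 0\<^sub>m m' m'"
  "dm Y * d2m Y = 0\<^sub>m m' r'" "d1m Y * dm Y = 0\<^sub>m r' m'"
proof -
  have "stot Y * stot Y = 0\<^sub>m (m'+m'+r') (m'+m'+r')" using scxY by (simp add: is_scx_def tdeg_def shift_def add.assoc)
  then have *: "dm Y * dm Y = 0\<^sub>m m' m' \<and> vm Y * dm Y + ((- dm Y) * vm Y + d2m Y * d1m Y) = 0\<^sub>m m' m' \<and>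
     (- dm Y) * d2m Y + d2m Y * rm Y = 0\<^sub>m m' r' \<and> d1m Y * dm Y + rm Y * d1m Y = 0\<^sub>m r' m' \<and>
     rm Y * rm Y = 0\<^sub>m r' r'"
    by (subst (asm) stot_sq) auto
  then show "dm Y * dm Y = 0\<^sub>m m' m'" "vm Y * dm Y + ((- dm Y) * vm Y + d2m Y * d1m Y) = 0\<^sub>m m' m'"
    "d1m Y * dm Y = 0\<^sub>m r' m'" by (simp_all add: rmY mult_carrier_iff)
  from * have "- (dm Y * d2m Y) = 0\<^sub>m m' r'" by (simp add: rmY mult_carrier_iff)
  then show "dm Y * d2m Y = 0\<^sub>m m' r'" by (metis uminus_uminus_mat uminus_zero_mat)
qed

lemma idf: "dm Y * lam f = lam f * dm X"
  "vm Y * lam f + ((- dm Y) * mu f + d2m Y * D1 f) = mu f * dm X + (lam f * vm X + D2 f * d1m X)"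
  "- (dm Y * D2 f) = lam f * d2m X"
  "d1m Y * lam f = D1 f * dm X"
proof -
  have "stot Y * mtot X Y f = mtot X Y f * stot X" using smf by (simp add: is_smor_def)
  then have *: "dm Y * lam f = lam f * dm X \<and>
     vm Y * lam f + ((- dm Y) * mu f + d2m Y * D1 f) = mu f * dm X + (lam f * vm X + D2 f * d1m X) \<and>
     (- dm Y) * lam f = lam f * (- dm X) \<and>
     (- dm Y) * D2 f + d2m Y * rho f = lam f * d2m X + D2 f * rm X \<and>
     d1m Y * lam f + rm Y * D1 f = D1 f * dm X + rho f * d1m X \<and>
     rm Y * rho f = rho f * rm X"
    by (subst (asm) smor_eq) auto
  then show "dm Y * lam f = lam f * dm X"
    "vm Y * lam f + ((- dm Y) * mu f + d2m Y * D1 f) = mu f * dm X + (lam f * vm X + D2 f * d1m X)"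
    "- (dm Y * D2 f) = lam f * d2m X" "d1m Y * lam f = D1 f * dm X"
    by (simp_all add: rmX rmY rho0 mult_carrier_iff)
qed


lemma e1vje2: "d1m X * (vm X ^\<^sub>m j * d2m X) = 0\<^sub>m r r"
proof -
  have "graded_map (rdeg X) (cdeg X) (int j * -2 + -2) (vm X ^\<^sub>m j * d2m X)"
    by (rule graded_mult[OF graded_pow[OF gv] ge2]) simp
  then have "graded_map (rdeg X) (rdeg X) (-1 + (int j * -2 + -2)) (d1m X * (vm X ^\<^sub>m j * d2m X))"
    by (rule graded_mult[OF ge1]) simp
  then show ?thesis by (rule graded_odd_zero[OF _ evX evX]) simp
qed

lemma dvX: "dm X * vm X = vm X * dm X + d2m X * d1m X"
  by (rule mat_solve1[OF _ _ _ idX(2)[simplified]]) (simp_all add: mult_carrier_iff)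

lemma dvY: "dm Y * vm Y = vm Y * dm Y + d2m Y * d1m Y"
  by (rule mat_solve1[OF _ _ _ idY(2)[simplified]]) (simp_all add: mult_carrier_iff)

lemma dvje2: "dm X * (vm X ^\<^sub>m j * d2m X) = 0\<^sub>m m r"
proof (induction j)
  case 0 then show ?case using idX(3) by simp
next
  case (Suc j)
  have "dm X * (vm X ^\<^sub>m Suc j * d2m X) = (dm X * vm X) * (vm X ^\<^sub>m j * d2m X)"
    by (simp add: pow_mat_Suc_left[OF carr(2)] msimps del: pow_mat.simps(2))
  also have "\<dots> = vm X * (dm X * (vm X ^\<^sub>m j * d2m X)) + d2m X * (d1m X * (vm X ^\<^sub>m j * d2m X))"
    unfolding dvX by (simp add: msimps)
  also have "\<dots> = 0\<^sub>m m r" unfolding Suc e1vje2 by simp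
  finally show ?case .
qed



primrec aa :: "nat \<Rightarrow> 'a mat" where
  "aa 0 = D2 f"
| "aa (Suc i) = vm Y * aa i + mu f * (vm X ^\<^sub>m i * d2m X)"

lemma aa_dims[simp]: "dim_row (aa i) = m'" "dim_col (aa i) = r"
  by (induction i) simp_all

lemma aa_carr[simp]: "aa i \<in> carrier_mat m' r"
  by (rule carrier_matI) simp_all

lemma aa_graded: "graded_map (rdeg X) (cdeg Y) (k - 1 - 2 * int i) (aa i)"
proof (induction i)
  case 0 then show ?case using gF2 by simp
next
  case (Suc i)
  have "graded_map (rdeg X) (cdeg X) (int i * -2 + -2) (vm X ^\<^sub>m i * d2m X)"
    by (rule graded_mult[OF graded_pow[OF gv] ge2]) simp
  then have 1: "graded_map (rdeg X) (cdeg Y) (k - 1 - 2 * int (Suc i)) (mu f * (vm X ^\<^sub>m i * d2m X))"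
    by (rule graded_mult[OF gU]) simp
  have 2: "graded_map (rdeg X) (cdeg Y) (k - 1 - 2 * int (Suc i)) (vm Y * aa i)"
    by (rule graded_mult[OF gv' Suc]) simp
  show ?case using graded_add[OF 2 1] by simp
qed

definition MM :: "nat \<Rightarrow> 'a mat" where
  "MM i = msum m' r (\<lambda>j. vm Y ^\<^sub>m j * (mu f * (vm X ^\<^sub>m (i - 1 - j) * d2m X))) {..<i}"

lemma MM_Suc: "MM (Suc i) = mu f * (vm X ^\<^sub>m i * d2m X) + vm Y * MM i"
proof -
  have "MM (Suc i) = msum m' r (\<lambda>_. vm Y ^\<^sub>m 0 * (mu f * (vm X ^\<^sub>m (Suc i - 1 - 0) * d2m X))) {0}
     + msum m' r (\<lambda>j. vm Y ^\<^sub>m Suc j * (mu f * (vm X ^\<^sub>m (Suc i - 1 - Suc j) * d2m X))) {..<i}"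
    unfolding MM_def by (rule msum_shift)
  also have "msum m' r (\<lambda>_. vm Y ^\<^sub>m 0 * (mu f * (vm X ^\<^sub>m (Suc i - 1 - 0) * d2m X))) {0}
     = mu f * (vm X ^\<^sub>m i * d2m X)"
    by (subst msum_singleton) (simp_all add: mult_carrier_iff)
  also have "msum m' r (\<lambda>j. vm Y ^\<^sub>m Suc j * (mu f * (vm X ^\<^sub>m (Suc i - 1 - Suc j) * d2m X))) {..<i}
     = msum m' r (\<lambda>j. vm Y * (vm Y ^\<^sub>m j * (mu f * (vm X ^\<^sub>m (i - 1 - j) * d2m X)))) {..<i}"
    by (rule msum_cong) (simp add: pow_mat_Suc_left[OF carr(7)] msimps del: pow_mat.simps(2))
  also have "\<dots> = vm Y * MM i"
    unfolding MM_def by (rule msum_mult_left[symmetric]) (simp_all add: mult_carrier_iff)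
  finally show ?thesis .
qed

lemma MM_dims[simp]: "dim_row (MM i) = m'" "dim_col (MM i) = r"
  by (simp_all add: MM_def)

lemma aa_closed: "aa i = vm Y ^\<^sub>m i * D2 f + MM i"
proof (induction i)
  case 0 then show ?case by (simp add: MM_def msum_empty)
next
  case (Suc i)
  have "aa (Suc i) = vm Y * (vm Y ^\<^sub>m i * D2 f) + vm Y * MM i + mu f * (vm X ^\<^sub>m i * d2m X)"
    by (simp add: Suc msimps)
  also have "\<dots> = vm Y ^\<^sub>m Suc i * D2 f + MM (Suc i)"
    unfolding MM_Suc pow_mat_Suc_left[OF carr(7)]
    by (rule mat_eqI_entries[of _ m' r]) (simp_all add: msimps mult_carrier_iff algebra_simps del: index_mult_mat(1) pow_mat.simps(2))
  finally show ?case .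
qed



lemma tau_Suc: "tau X Y f (Suc i) = d1m Y * aa i + D1 f * (vm X ^\<^sub>m i * d2m X)"
proof -
  have fo: "foldr (\<lambda>j acc. d1m Y * (vm Y ^\<^sub>m j) * mu f * (vm X ^\<^sub>m (i - 1 - j)) * d2m X + acc) [0..<i] (0\<^sub>m r' r)
      = msum r' r (\<lambda>j. d1m Y * (vm Y ^\<^sub>m j) * mu f * (vm X ^\<^sub>m (i - 1 - j)) * d2m X) (set [0..<i])"
    by (rule foldr_msum) (simp_all add: mult_carrier_iff)
  have "set [0..<i] = {..<i}" by auto
  have mm: "d1m Y * MM i = msum r' r (\<lambda>j. d1m Y * (vm Y ^\<^sub>m j) * mu f * (vm X ^\<^sub>m (i - 1 - j)) * d2m X) {..<i}"
    unfolding MM_def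
    by (subst msum_mult_left[of _ _ m']) (auto simp: mult_carrier_iff msimps intro!: msum_cong)
  show ?thesis
    unfolding tau.simps fo \<open>set [0..<i] = {..<i}\<close> aa_closed mm[symmetric]
    by (rule mat_eqI_entries[of _ r' r]) (simp_all add: msimps mult_carrier_iff algebra_simps del: index_mult_mat(1))
qed



lemma daa_step:
  assumes IH: "dm Y * aa i = - (lam f * (vm X ^\<^sub>m i * d2m X))"
  shows "dm Y * aa (Suc i) = d2m Y * tau X Y f (Suc i) + - (lam f * (vm X ^\<^sub>m Suc i * d2m X))"
proof -
  define W where "W = vm X ^\<^sub>m i * d2m X"
  have W[simp]: "dim_row W = m" "dim_col W = r" by (simp_all add: W_def)
  have dW: "dm X * W = 0\<^sub>m m r" "d1m X * W = 0\<^sub>m r r" unfolding W_def by (rule dvje2, rule e1vje2)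
  have "(vm Y * lam f + ((- dm Y) * mu f + d2m Y * D1 f)) * W = (mu f * dm X + (lam f * vm X + D2 f * d1m X)) * W"
    using idf(2) by simp
  then have "vm Y * (lam f * W) + (- (dm Y * (mu f * W)) + d2m Y * (D1 f * W)) = lam f * (vm X * W)"
    by (simp add: msimps dW mult_carrier_iff)
  then have fb: "dm Y * (mu f * W) = vm Y * (lam f * W) + (d2m Y * (D1 f * W) + - (lam f * (vm X * W)))"
    by (rule mat_solve2[rotated 4]) (simp_all add: mult_carrier_iff)
  have dv: "dm Y * (vm Y * aa i) = vm Y * (dm Y * aa i) + d2m Y * (d1m Y * aa i)"
  proof -
    have "dm Y * (vm Y * aa i) = (vm Y * dm Y + d2m Y * d1m Y) * aa i"
      by (simp add: dvY[symmetric] msimps)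
    also have "\<dots> = vm Y * (dm Y * aa i) + d2m Y * (d1m Y * aa i)"
      by (simp add: msimps)
    finally show ?thesis .
  qed
  have "dm Y * aa (Suc i) = dm Y * (vm Y * aa i) + dm Y * (mu f * W)"
    by (simp add: msimps W_def)
  also have "\<dots> = d2m Y * tau X Y f (Suc i) + - (lam f * (vm X ^\<^sub>m Suc i * d2m X))"
    unfolding dv fb IH tau_Suc pow_mat_Suc_left[OF carr(2)] W_def[symmetric]
    by (rule mat_eqI_entries[of _ m' r]) (simp_all add: msimps mult_carrier_iff algebra_simps W_def del: index_mult_mat(1) pow_mat.simps(2))
  finally show ?thesis .
qed

lemma daa_lt: "i < n \<Longrightarrow> dm Y * aa i = - (lam f * (vm X ^\<^sub>m i * d2m X))"
proof (induction i)
  case 0 then show ?case by (simp add: idf(3)[symmetric])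
next
  case (Suc i)
  then have "dm Y * aa (Suc i) = d2m Y * tau X Y f (Suc i) + - (lam f * (vm X ^\<^sub>m Suc i * d2m X))"
    by (intro daa_step) simp
  then show ?case using tauz[OF Suc.prems] by (simp add: mult_carrier_iff)
qed

lemma daa_n: "dm Y * aa n = d2m Y * tau X Y f n + - (lam f * (vm X ^\<^sub>m n * d2m X))"
proof -
  obtain i where n: "n = Suc i" using n1 by (cases n) auto
  show ?thesis unfolding n by (rule daa_step, rule daa_lt) (use n in simp)
qed

lemma tau_lt: "Suc i < n \<Longrightarrow> d1m Y * aa i = - (D1 f * (vm X ^\<^sub>m i * d2m X))"
  using tauz[of "Suc i"] unfolding tau_Suc
  by (intro mat_solve3[of _ r' r]) (simp_all add: mult_carrier_iff)



abbreviation "ns \<equiv> sig_sizes n X"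

lemma len_ns[simp]: "length ns = Suc n" by (simp add: sig_sizes_def)

lemma ns_nth[simp]: "p < Suc n \<Longrightarrow> ns ! p = (if p = 0 then m else r)"
  by (auto simp: sig_sizes_def nth_Cons')

lemma sum_ns: "sum_list ns = m + n * r"
  by (simp add: sig_sizes_def sum_list_replicate)

definition SD :: "nat \<Rightarrow> nat \<Rightarrow> 'a mat" where
  "SD p q = (if p = 0 \<and> q = 0 then dm X
             else if p = 0 then - ((vm X ^\<^sub>m (q - 1)) * d2m X)
             else 0\<^sub>m (ns ! p) (ns ! q))"

definition SV :: "nat \<Rightarrow> nat \<Rightarrow> 'a mat" where
  "SV p q = (if p = 0 \<and> q = 0 then vm X
             else if p = 1 \<and> q = 0 then d1m X
             else if 1 \<le> q \<and> p = q + 1 then 1\<^sub>m r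
             else 0\<^sub>m (ns ! p) (ns ! q))"

definition SD1 :: "nat \<Rightarrow> nat \<Rightarrow> 'a mat" where
  "SD1 p q = (if q = n then 1\<^sub>m r else 0\<^sub>m r (ns ! q))"

definition SD2 :: "nat \<Rightarrow> nat \<Rightarrow> 'a mat" where
  "SD2 p q = (if p = 0 then (vm X ^\<^sub>m n) * d2m X else 0\<^sub>m (ns ! p) r)"

lemma Sig_parts:
  "dm (Sigma n X) = block_mat ns ns SD" "vm (Sigma n X) = block_mat ns ns SV"
  "d1m (Sigma n X) = block_mat [r] ns SD1" "d2m (Sigma n X) = block_mat ns [r] SD2"
  "rm (Sigma n X) = 0\<^sub>m r r" "rdeg (Sigma n X) = rdeg X"
  "cdeg (Sigma n X) = shift (2 * int n) (cdeg X) @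
              concat (map (\<lambda>i. shift (2 * int n - 1 - 2 * int i) (rdeg X)) [0..<n])"
  unfolding Sigma_def Let_def SD_def SV_def SD1_def SD2_def by simp_all

lemma len_cdegS: "length (cdeg (Sigma n X)) = sum_list ns"
  unfolding Sig_parts sum_ns by (simp add: length_concat shift_def o_def sum_list_triv)

lemma SD_dims[simp]: "p < Suc n \<Longrightarrow> q < Suc n \<Longrightarrow> dim_row (SD p q) = ns ! p"
  "p < Suc n \<Longrightarrow> q < Suc n \<Longrightarrow> dim_col (SD p q) = ns ! q"
  by (auto simp: SD_def)

lemma SV_dims[simp]: "p < Suc n \<Longrightarrow> q < Suc n \<Longrightarrow> dim_row (SV p q) = ns ! p"
  "p < Suc n \<Longrightarrow> q < Suc n \<Longrightarrow> dim_col (SV p q) = ns ! q"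
  using n1 by (auto simp: SV_def)

lemma SD1_dims[simp]: "q < Suc n \<Longrightarrow> dim_row (SD1 p q) = r"
  "q < Suc n \<Longrightarrow> dim_col (SD1 p q) = ns ! q"
  using n1 by (auto simp: SD1_def)

lemma SD2_dims[simp]: "p < Suc n \<Longrightarrow> dim_row (SD2 p q) = ns ! p"
  "p < Suc n \<Longrightarrow> dim_col (SD2 p q) = r"
  by (auto simp: SD2_def)

lemma S_carr:
  "p < Suc n \<Longrightarrow> q < Suc n \<Longrightarrow> SD p q \<in> carrier_mat (ns ! p) (ns ! q)"
  "p < Suc n \<Longrightarrow> q < Suc n \<Longrightarrow> SV p q \<in> carrier_mat (ns ! p) (ns ! q)"
  "q < Suc n \<Longrightarrow> SD1 p q \<in> carrier_mat r (ns ! q)"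
  "p < Suc n \<Longrightarrow> SD2 p q \<in> carrier_mat (ns ! p) r"
  by (rule carrier_matI; simp del: ns_nth)+



lemma SDSD: "p < Suc n \<Longrightarrow> q < Suc n \<Longrightarrow> s < Suc n \<Longrightarrow> SD p s * SD s q = 0\<^sub>m (ns!p) (ns!q)"
  by (cases "p = 0"; cases "s = 0"; cases "q = 0") (simp_all add: SD_def idX(1) dvje2 mult_carrier_iff)

lemma SigA: "dm (Sigma n X) * dm (Sigma n X) = 0\<^sub>m (sum_list ns) (sum_list ns)"
proof -
  have "dm (Sigma n X) * dm (Sigma n X) = block_mat ns ns (\<lambda>p q. msum (ns!p) (ns!q) (\<lambda>s. SD p s * SD s q) {..<length ns})"
    unfolding Sig_parts by (rule block_mat_mult) (auto intro: S_carr simp del: ns_nth)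
  also have "\<dots> = 0\<^sub>m (sum_list ns) (sum_list ns)"
    by (rule block_mat_zero, rule msum_zero) (auto simp: SDSD simp del: ns_nth)
  finally show ?thesis .
qed



lemma vpow_pred: "0 < q \<Longrightarrow> vm X * (vm X ^\<^sub>m (q - 1) * d2m X) = vm X ^\<^sub>m q * d2m X"
proof -
  assume "0 < q" then obtain j where q: "q = Suc j" by (cases q) auto
  show ?thesis unfolding q by (simp add: pow_mat_Suc_left[OF carr(2)] msimps del: pow_mat.simps(2))
qed

lemma SigB_blk:
  assumes p: "p < Suc n" and q: "q < Suc n"
  shows "SV p 0 * SD 0 q + (msum (ns!p) (ns!q) (\<lambda>s. - SD p s * SV s q) {..<Suc n} + SD2 p 0 * SD1 0 q)
     = 0\<^sub>m (ns!p) (ns!q)"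
proof (cases "p = 0")
  case p0: True
  show ?thesis
  proof (cases "q = 0")
    case q0: True
    have ms: "msum (ns!0) (ns!0) (\<lambda>s. - SD 0 s * SV s 0) {..<Suc n} = - SD 0 0 * SV 0 0 + - SD 0 1 * SV 1 0"
      by (rule msum_two_lt) (use n1 in \<open>auto simp: SV_def SD_def mult_carrier_iff\<close>)
    have "n \<noteq> 0" using n1 by simp
    then show ?thesis unfolding p0 q0 ms
      by (simp add: SV_def SD_def SD1_def SD2_def dvX mult_carrier_iff)
         (rule mat_eqI_entries[of _ m m]; simp add: mult_carrier_iff del: index_mult_mat(1))
  next
    case q0: False
    show ?thesis
    proof (cases "q = n")
      case qn: True
      have ms: "msum (ns!p) (ns!q) (\<lambda>s. - SD p s * SV s q) {..<Suc n} = 0\<^sub>m (ns!p) (ns!q)"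
        by (rule msum_zero) (use q0 qn p0 in \<open>auto simp: SV_def SD_def mult_carrier_iff\<close>)
      show ?thesis unfolding ms using q0 qn p0 vpow_pred[of n] n1
        by (simp add: SV_def SD_def SD1_def SD2_def mult_carrier_iff)
    next
      case qn: False
      have ms: "msum (ns!p) (ns!q) (\<lambda>s. - SD p s * SV s q) {..<Suc n} = - SD p (Suc q) * SV (Suc q) q"
        by (rule msum_single_lt) (use q q0 qn p0 in \<open>auto simp: SV_def SD_def mult_carrier_iff\<close>)
      show ?thesis unfolding ms using q q0 qn p0 vpow_pred[of q]
        by (simp add: SV_def SD_def SD1_def SD2_def mult_carrier_iff)
    qed
  qed
next
  case p0: False
  have ms: "msum (ns!p) (ns!q) (\<lambda>s. - SD p s * SV s q) {..<Suc n} = 0\<^sub>m (ns!p) (ns!q)"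
    by (rule msum_zero) (use p q p0 in \<open>auto simp: SD_def\<close>)
  show ?thesis unfolding ms using p q p0 idX(4) e1vje2
    by (cases "p = 1"; cases "q = 0") (simp_all add: SV_def SD_def SD2_def mult_carrier_iff)
qed



lemma P2: "vm (Sigma n X) * dm (Sigma n X) = block_mat ns ns (\<lambda>p q. SV p 0 * SD 0 q)"
proof -
  have "vm (Sigma n X) * dm (Sigma n X) = block_mat ns ns (\<lambda>p q. msum (ns!p) (ns!q) (\<lambda>s. SV p s * SD s q) {..<length ns})"
    unfolding Sig_parts by (rule block_mat_mult) (auto intro: S_carr simp del: ns_nth)
  also have "\<dots> = block_mat ns ns (\<lambda>p q. SV p 0 * SD 0 q)"
    by (rule block_mat_cong, simp only: len_ns, rule msum_single_lt)
      (auto simp: SD_def mult_carrier_iff)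
  finally show ?thesis .
qed

lemma negSD: "- dm (Sigma n X) = block_mat ns ns (\<lambda>p q. - SD p q)"
  unfolding Sig_parts by (rule block_mat_uminus) (auto intro: S_carr simp del: ns_nth)

lemma P3: "(- dm (Sigma n X)) * vm (Sigma n X) =
   block_mat ns ns (\<lambda>p q. msum (ns!p) (ns!q) (\<lambda>s. - SD p s * SV s q) {..<Suc n})"
  unfolding negSD Sig_parts(2) using block_mat_mult[of ns ns "\<lambda>p q. - SD p q" ns SV]
  by (auto intro: S_carr simp del: ns_nth)

lemma P4: "d2m (Sigma n X) * d1m (Sigma n X) = block_mat ns ns (\<lambda>p q. SD2 p 0 * SD1 0 q)"
proof -
  have "d2m (Sigma n X) * d1m (Sigma n X) = block_mat ns ns (\<lambda>p q. msum (ns!p) (ns!q) (\<lambda>s. SD2 p s * SD1 s q) {..<length [r]})"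
    unfolding Sig_parts by (rule block_mat_mult) (auto intro: S_carr simp del: ns_nth)
  also have "\<dots> = block_mat ns ns (\<lambda>p q. SD2 p 0 * SD1 0 q)"
    by (rule block_mat_cong, simp only: length_Cons list.size, rule msum_single_lt)
      (auto simp: mult_carrier_iff simp del: ns_nth)
  finally show ?thesis .
qed

lemma SigB: "vm (Sigma n X) * dm (Sigma n X) + ((- dm (Sigma n X)) * vm (Sigma n X) + d2m (Sigma n X) * d1m (Sigma n X))
   = 0\<^sub>m (sum_list ns) (sum_list ns)"
proof -
  have "vm (Sigma n X) * dm (Sigma n X) + ((- dm (Sigma n X)) * vm (Sigma n X) + d2m (Sigma n X) * d1m (Sigma n X))
    = block_mat ns ns (\<lambda>p q. SV p 0 * SD 0 q + (msum (ns!p) (ns!q) (\<lambda>s. - SD p s * SV s q) {..<Suc n} + SD2 p 0 * SD1 0 q))"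
    unfolding P2 P3 P4
    by (subst block_mat_add, simp_all add: mult_carrier_iff, subst block_mat_add)
       (simp_all add: mult_carrier_iff)
  also have "\<dots> = 0\<^sub>m (sum_list ns) (sum_list ns)"
    by (rule block_mat_zero) (simp only: len_ns SigB_blk)
  finally show ?thesis .
qed

lemma SigC: "(- dm (Sigma n X)) * d2m (Sigma n X) + d2m (Sigma n X) * rm (Sigma n X) = 0\<^sub>m (sum_list ns) r"
proof -
  have "(- dm (Sigma n X)) * d2m (Sigma n X) = block_mat ns [r] (\<lambda>p q. msum (ns!p) ([r]!q) (\<lambda>s. - SD p s * SD2 s q) {..<length ns})"
    unfolding negSD unfolding Sig_parts by (rule block_mat_mult) (auto intro: S_carr simp del: ns_nth)
  also have "\<dots> = block_mat ns [r] (\<lambda>p q. 0\<^sub>m (ns!p) ([r]!q))"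
  proof (rule block_mat_cong)
    fix p q assume p: "p < length ns" and q: "q < length [r]"
    have "msum (ns!p) ([r]!q) (\<lambda>s. - SD p s * SD2 s q) {..<length ns} = - SD p 0 * SD2 0 q"
      by (simp only: len_ns, rule msum_single_lt) (use p q in \<open>auto simp: SD2_def mult_carrier_iff simp del: ns_nth\<close>)
    also have "\<dots> = 0\<^sub>m (ns!p) ([r]!q)"
      using p q dvje2[of n] by (cases "p = 0") (simp_all add: SD_def SD2_def mult_carrier_iff)
    finally show "msum (ns!p) ([r]!q) (\<lambda>s. - SD p s * SD2 s q) {..<length ns} = 0\<^sub>m (ns!p) ([r]!q)" .
  qed
  also have "\<dots> = 0\<^sub>m (sum_list ns) (sum_list [r])" by (rule block_mat_zero) simp
  finally show ?thesis unfolding Sig_parts(5) by (simp add: mult_carrier_iff Sig_parts(4))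
qed

lemma SigD: "d1m (Sigma n X) * dm (Sigma n X) + rm (Sigma n X) * d1m (Sigma n X) = 0\<^sub>m r (sum_list ns)"
proof -
  have "d1m (Sigma n X) * dm (Sigma n X) = block_mat [r] ns (\<lambda>p q. msum ([r]!p) (ns!q) (\<lambda>s. SD1 p s * SD s q) {..<length ns})"
    unfolding Sig_parts by (rule block_mat_mult) (auto intro: S_carr simp del: ns_nth)
  also have "\<dots> = 0\<^sub>m (sum_list [r]) (sum_list ns)"
  proof (rule block_mat_zero, rule msum_zero)
    fix p q s assume "p < length [r]" "q < length ns" "s \<in> {..<length ns}"
    then show "SD1 p s * SD s q = 0\<^sub>m ([r]!p) (ns!q)"
      using n1 by (cases "s = n") (auto simp: SD1_def SD_def)
  qed simp
  finally show ?thesis unfolding Sig_parts(5) by (simp add: mult_carrier_iff Sig_parts(3))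
qed

lemma Sig_stot: "stot (Sigma n X) * stot (Sigma n X) = 0\<^sub>m (length (tdeg (Sigma n X))) (length (tdeg (Sigma n X)))"
proof -
  have l: "length (tdeg (Sigma n X)) = sum_list ns + sum_list ns + r"
    by (simp add: tdeg_def shift_def len_cdegS Sig_parts(6))
  show ?thesis unfolding l
    by (subst stot_sq[where m = "sum_list ns" and r = r])
       (simp_all add: len_cdegS Sig_parts(6) SigA SigB SigC SigD, auto simp: Sig_parts)
qed



definition Ds :: "int list list" where
  "Ds = shift (2 * int n) (cdeg X) # map (\<lambda>i. shift (2 * int n - 1 - 2 * int i) (rdeg X)) [0..<n]"

lemma cdegS: "cdeg (Sigma n X) = concat Ds"
  unfolding Sig_parts Ds_def by simp

lemma mlDs: "map length Ds = ns"
  unfolding Ds_def sig_sizes_def by (simp add: shift_def o_def map_replicate_trivial)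

lemma Ds_nth: "q < Suc n \<Longrightarrow> Ds ! q = (if q = 0 then shift (2 * int n) (cdeg X)
   else shift (2 * int n - 1 - 2 * int (q - 1)) (rdeg X))"
  unfolding Ds_def by (cases q) auto

lemma len_Ds[simp]: "length Ds = Suc n" by (simp add: Ds_def)

lemma lenDs_nth: "q < Suc n \<Longrightarrow> length (Ds ! q) = ns ! q"
  using mlDs by (metis len_Ds nth_map)

lemma g_vpow_e2: "graded_map (rdeg X) (cdeg X) (int j * -2 + -2) (vm X ^\<^sub>m j * d2m X)"
  by (rule graded_mult[OF graded_pow[OF gv] ge2]) simp

lemma gS_dm: "graded_map (cdeg (Sigma n X)) (cdeg (Sigma n X)) (-1) (dm (Sigma n X))"
  unfolding cdegS Sig_parts(1) mlDs[symmetric]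
proof (rule graded_block)
  fix p q assume p: "p < length Ds" and q: "q < length Ds"
  show "graded_map (Ds ! q) (Ds ! p) (- 1) (SD p q)"
  proof (cases "p = 0")
    case True
    show ?thesis
    proof (cases "q = 0")
      case True
      then show ?thesis using \<open>p = 0\<close> gd by (simp add: SD_def Ds_nth graded_shift)
    next
      case False
      have "graded_map (rdeg X) (cdeg X) (- 1 + (2 * int n - 1 - 2 * int (q - 1)) - 2 * int n)
          (- (vm X ^\<^sub>m (q - 1) * d2m X))"
        by (rule graded_deg[OF graded_uminus[OF g_vpow_e2]]) simp
      then show ?thesis using \<open>p = 0\<close> False q by (simp add: SD_def Ds_nth graded_shift)
    qed
  next
    case False
    then have "SD p q = 0\<^sub>m (ns!p) (ns!q)" by (simp add: SD_def)
    then show ?thesis using p q by (simp only:) (rule graded_zero'; simp add: lenDs_nth)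
  qed
qed

lemma gS_vm: "graded_map (cdeg (Sigma n X)) (cdeg (Sigma n X)) (-2) (vm (Sigma n X))"
  unfolding cdegS Sig_parts(2) mlDs[symmetric]
proof (rule graded_block)
  fix p q assume p: "p < length Ds" and q: "q < length Ds"
  show "graded_map (Ds ! q) (Ds ! p) (- 2) (SV p q)"
  proof -
    consider "p = 0 \<and> q = 0" | "p = 1 \<and> q = 0" | "1 \<le> q \<and> p = q + 1" |
      "\<not> (p = 0 \<and> q = 0) \<and> \<not> (p = 1 \<and> q = 0) \<and> \<not> (1 \<le> q \<and> p = q + 1)" by blast
    then show ?thesis
    proof cases
      case 1 then show ?thesis using gv by (simp add: SV_def Ds_nth graded_shift)
    next
      case 2 then show ?thesis using ge1 n1 p by (simp add: SV_def Ds_nth graded_shift)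
    next
      case 3
      have "graded_map (rdeg X) (rdeg X) (- 2 + (2 * int n - 1 - 2 * int (q - 1)) - (2 * int n - 1 - 2 * int (p - 1)))
          (1\<^sub>m r :: 'a mat)"
        by (rule graded_deg[OF graded_one]) (use 3 in simp)
      then show ?thesis using 3 p q by (simp add: SV_def Ds_nth graded_shift)
    next
      case 4
      then have "SV p q = 0\<^sub>m (ns!p) (ns!q)" unfolding SV_def by auto
      then show ?thesis using p q by (simp only:) (rule graded_zero'; simp add: lenDs_nth)
    qed
  qed
qed

lemma gS_d1: "graded_map (cdeg (Sigma n X)) (rdeg (Sigma n X)) (-1) (d1m (Sigma n X))"
proof -
  have "graded_map (concat Ds) (concat [rdeg X]) (-1) (block_mat (map length [rdeg X]) (map length Ds) SD1)"
  proof (rule graded_block)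
    fix p q assume p: "p < length [rdeg X]" and q: "q < length Ds"
    show "graded_map (Ds ! q) ([rdeg X] ! p) (- 1) (SD1 p q)"
    proof (cases "q = n")
      case True
      have "graded_map (rdeg X) (rdeg X) (- 1 + (2 * int n - 1 - 2 * int (q - 1))) (1\<^sub>m r :: 'a mat)"
        by (rule graded_deg[OF graded_one]) (use True n1 in simp)
      then show ?thesis using True p n1 by (simp add: SD1_def Ds_nth graded_shift_src)
    next
      case False
      then have "SD1 p q = 0\<^sub>m r (ns!q)" by (simp add: SD1_def)
      then show ?thesis using p q by (simp only:) (rule graded_zero'; simp add: lenDs_nth)
    qed
  qed
  then show ?thesis unfolding cdegS Sig_parts(3,6) mlDs by simp
qed

lemma gS_d2: "graded_map (rdeg (Sigma n X)) (cdeg (Sigma n X)) (-2) (d2m (Sigma n X))"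
proof -
  have "graded_map (concat [rdeg X]) (concat Ds) (-2) (block_mat (map length Ds) (map length [rdeg X]) SD2)"
  proof (rule graded_block)
    fix p q assume p: "p < length Ds" and q: "q < length [rdeg X]"
    show "graded_map ([rdeg X] ! q) (Ds ! p) (- 2) (SD2 p q)"
    proof (cases "p = 0")
      case True
      have "graded_map (rdeg X) (cdeg X) (- 2 - 2 * int n) (vm X ^\<^sub>m n * d2m X)"
        by (rule graded_deg[OF g_vpow_e2]) simp
      then show ?thesis using True q by (simp add: SD2_def Ds_nth graded_shift_tgt)
    next
      case False
      then have "SD2 p q = 0\<^sub>m (ns!p) r" by (simp add: SD2_def)
      then show ?thesis using p q by (simp only:) (rule graded_zero'; simp add: lenDs_nth)
    qed
  qed
  then show ?thesis unfolding cdegS Sig_parts(4,6) mlDs by simp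
qed

lemma scxS: "is_scx (Sigma n X)"
  unfolding is_scx_def
  using gS_dm gS_vm gS_d1 gS_d2 Sig_stot
  by (simp add: graded_shift_tgt Sig_parts(5,6), intro graded_zero') simp_all

lemma rpS: "r_perfect (Sigma n X)"
  using scxS evX by (simp add: r_perfect_def Sig_parts(6))



definition LL :: "nat \<Rightarrow> nat \<Rightarrow> 'a mat" where
  "LL p q = (if q = 0 then lam f else aa (q - 1))"
definition UU :: "nat \<Rightarrow> nat \<Rightarrow> 'a mat" where
  "UU p q = (if q = 0 then mu f else 0\<^sub>m m' (ns ! q))"
definition EE :: "nat \<Rightarrow> nat \<Rightarrow> 'a mat" where
  "EE p q = (if q = 0 then D1 f else 0\<^sub>m r' (ns ! q))"

definition fS :: "'a smor" where
  "fS = \<lparr> lam = block_mat [m'] ns LL, mu = block_mat [m'] ns UU, D1 = block_mat [r'] ns EE,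
          D2 = aa n, rho = tau X Y f n \<rparr>"

lemma fS_parts: "lam fS = block_mat [m'] ns LL" "mu fS = block_mat [m'] ns UU"
  "D1 fS = block_mat [r'] ns EE" "D2 fS = aa n" "rho fS = tau X Y f n"
  by (simp_all add: fS_def)

lemma LL_dims[simp]: "q < Suc n \<Longrightarrow> dim_row (LL p q) = m'" "q < Suc n \<Longrightarrow> dim_col (LL p q) = ns ! q"
  by (auto simp: LL_def)
lemma UU_dims[simp]: "q < Suc n \<Longrightarrow> dim_row (UU p q) = m'" "q < Suc n \<Longrightarrow> dim_col (UU p q) = ns ! q"
  by (auto simp: UU_def)
lemma EE_dims[simp]: "q < Suc n \<Longrightarrow> dim_row (EE p q) = r'" "q < Suc n \<Longrightarrow> dim_col (EE p q) = ns ! q"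
  by (auto simp: EE_def)

lemma F_carr:
  "q < Suc n \<Longrightarrow> LL p q \<in> carrier_mat m' (ns ! q)"
  "q < Suc n \<Longrightarrow> UU p q \<in> carrier_mat m' (ns ! q)"
  "q < Suc n \<Longrightarrow> EE p q \<in> carrier_mat r' (ns ! q)"
  by (rule carrier_matI; simp del: ns_nth)+

lemma tau_n: "tau X Y f n = d1m Y * aa (n - 1) + D1 f * (vm X ^\<^sub>m (n - 1) * d2m X)"
  using tau_Suc[of "n - 1"] n1 by simp

lemma tau_n_dims[simp]: "dim_row (tau X Y f n) = r'" "dim_col (tau X Y f n) = r"
  unfolding tau_n by simp_all

lemma gtau_n: "graded_map (rdeg X) (rdeg Y) (k - 2 * int n) (tau X Y f n)"
proof -
  have 1: "graded_map (rdeg X) (rdeg Y) (k - 2 * int n) (d1m Y * aa (n - 1))"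
    by (rule graded_mult[OF ge1' aa_graded]) (use n1 in simp)
  have 2: "graded_map (rdeg X) (rdeg Y) (k - 2 * int n) (D1 f * (vm X ^\<^sub>m (n - 1) * d2m X))"
    by (rule graded_mult[OF gF1 g_vpow_e2]) (use n1 in simp)
  show ?thesis unfolding tau_n by (rule graded_add[OF 1 2])
qed

lemma gfS: "graded_map (cdeg (Sigma n X)) (cdeg Y) (k - 2 * int n) (lam fS)"
  "graded_map (cdeg (Sigma n X)) (shift 1 (cdeg Y)) (k - 2 * int n) (mu fS)"
  "graded_map (rdeg (Sigma n X)) (shift 1 (cdeg Y)) (k - 2 * int n) (D2 fS)"
  "graded_map (cdeg (Sigma n X)) (rdeg Y) (k - 2 * int n) (D1 fS)"
  "graded_map (rdeg (Sigma n X)) (rdeg Y) (k - 2 * int n) (rho fS)"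
proof -
  have "graded_map (concat Ds) (concat [cdeg Y]) (k - 2 * int n) (block_mat (map length [cdeg Y]) (map length Ds) LL)"
  proof (rule graded_block)
    fix p q assume p: "p < length [cdeg Y]" and q: "q < length Ds"
    show "graded_map (Ds ! q) ([cdeg Y] ! p) (k - 2 * int n) (LL p q)"
    proof (cases "q = 0")
      case True then show ?thesis using p gL by (simp add: LL_def Ds_nth graded_shift_src)
    next
      case False
      have "graded_map (rdeg X) (cdeg Y) (k - 2 * int n + (2 * int n - 1 - 2 * int (q - 1))) (aa (q - 1))"
        by (rule graded_deg[OF aa_graded]) simp
      then show ?thesis using p q False by (simp add: LL_def Ds_nth graded_shift_src)
    qed
  qed
  then show "graded_map (cdeg (Sigma n X)) (cdeg Y) (k - 2 * int n) (lam fS)"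
    unfolding cdegS fS_parts mlDs by simp
  have "graded_map (concat Ds) (concat [cdeg Y]) (k - 2 * int n - 1) (block_mat (map length [cdeg Y]) (map length Ds) UU)"
  proof (rule graded_block)
    fix p q assume p: "p < length [cdeg Y]" and q: "q < length Ds"
    show "graded_map (Ds ! q) ([cdeg Y] ! p) (k - 2 * int n - 1) (UU p q)"
    proof (cases "q = 0")
      case True then show ?thesis using p gU by (simp add: UU_def Ds_nth graded_shift_src)
    next
      case False
      then have "UU p q = 0\<^sub>m m' (ns!q)" by (simp add: UU_def)
      then show ?thesis using p q by (simp only:) (rule graded_zero'; simp add: lenDs_nth)
    qed
  qed
  then show "graded_map (cdeg (Sigma n X)) (shift 1 (cdeg Y)) (k - 2 * int n) (mu fS)"
    unfolding cdegS fS_parts mlDs graded_shift_tgt by simp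
  show "graded_map (rdeg (Sigma n X)) (shift 1 (cdeg Y)) (k - 2 * int n) (D2 fS)"
    unfolding fS_parts Sig_parts graded_shift_tgt by (rule graded_deg[OF aa_graded]) simp
  have "graded_map (concat Ds) (concat [rdeg Y]) (k - 2 * int n) (block_mat (map length [rdeg Y]) (map length Ds) EE)"
  proof (rule graded_block)
    fix p q assume p: "p < length [rdeg Y]" and q: "q < length Ds"
    show "graded_map (Ds ! q) ([rdeg Y] ! p) (k - 2 * int n) (EE p q)"
    proof (cases "q = 0")
      case True then show ?thesis using p gF1 by (simp add: EE_def Ds_nth graded_shift_src)
    next
      case False
      then have "EE p q = 0\<^sub>m r' (ns!q)" by (simp add: EE_def)
      then show ?thesis using p q by (simp only:) (rule graded_zero'; simp add: lenDs_nth)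
    qed
  qed
  then show "graded_map (cdeg (Sigma n X)) (rdeg Y) (k - 2 * int n) (D1 fS)"
    unfolding cdegS fS_parts mlDs by simp
  show "graded_map (rdeg (Sigma n X)) (rdeg Y) (k - 2 * int n) (rho fS)"
    unfolding fS_parts Sig_parts by (rule gtau_n)
qed



lemma sl1[simp]: "sum_list [a] = (a::nat)" by simp

lemma Q_left:
  assumes "A \<in> carrier_mat nr m'"
  shows "A * lam fS = block_mat [nr] ns (\<lambda>p q. A * LL 0 q)"
    "A * mu fS = block_mat [nr] ns (\<lambda>p q. A * UU 0 q)"
  unfolding fS_parts by (rule mult_block_left[OF assms]; use F_carr in \<open>auto simp del: ns_nth\<close>)+

lemma Q_left': 
  assumes "A \<in> carrier_mat nr r'"
  shows "A * D1 fS = block_mat [nr] ns (\<lambda>p q. A * EE 0 q)"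
  unfolding fS_parts by (rule mult_block_left[OF assms]; use F_carr in \<open>auto simp del: ns_nth\<close>)

lemma Q_SD:
  "lam fS * dm (Sigma n X) = block_mat [m'] ns (\<lambda>p q. lam f * SD 0 q)"
  "mu fS * dm (Sigma n X) = block_mat [m'] ns (\<lambda>p q. mu f * SD 0 q)"
  "D1 fS * dm (Sigma n X) = block_mat [r'] ns (\<lambda>p q. D1 f * SD 0 q)"
proof -
  have "lam fS * dm (Sigma n X) = block_mat [m'] ns (\<lambda>p q. msum ([m']!p) (ns!q) (\<lambda>s. LL p s * SD s q) {..<length ns})"
    unfolding fS_parts Sig_parts by (rule block_mat_mult) (auto intro: S_carr F_carr simp del: ns_nth)
  also have "\<dots> = block_mat [m'] ns (\<lambda>p q. lam f * SD 0 q)"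
    by (rule block_mat_cong, simp only: len_ns, subst msum_single_lt[of _ 0])
      (auto simp: SD_def LL_def mult_carrier_iff)
  finally show "lam fS * dm (Sigma n X) = block_mat [m'] ns (\<lambda>p q. lam f * SD 0 q)" .
  have "mu fS * dm (Sigma n X) = block_mat [m'] ns (\<lambda>p q. msum ([m']!p) (ns!q) (\<lambda>s. UU p s * SD s q) {..<length ns})"
    unfolding fS_parts Sig_parts by (rule block_mat_mult) (auto intro: S_carr F_carr simp del: ns_nth)
  also have "\<dots> = block_mat [m'] ns (\<lambda>p q. mu f * SD 0 q)"
    by (rule block_mat_cong, simp only: len_ns, subst msum_single_lt[of _ 0])
      (auto simp: SD_def UU_def mult_carrier_iff)
  finally show "mu fS * dm (Sigma n X) = block_mat [m'] ns (\<lambda>p q. mu f * SD 0 q)" .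
  have "D1 fS * dm (Sigma n X) = block_mat [r'] ns (\<lambda>p q. msum ([r']!p) (ns!q) (\<lambda>s. EE p s * SD s q) {..<length ns})"
    unfolding fS_parts Sig_parts by (rule block_mat_mult) (auto intro: S_carr F_carr simp del: ns_nth)
  also have "\<dots> = block_mat [r'] ns (\<lambda>p q. D1 f * SD 0 q)"
    by (rule block_mat_cong, simp only: len_ns, subst msum_single_lt[of _ 0])
      (auto simp: SD_def EE_def mult_carrier_iff)
  finally show "D1 fS * dm (Sigma n X) = block_mat [r'] ns (\<lambda>p q. D1 f * SD 0 q)" .
qed

lemma Q_SV: "lam fS * vm (Sigma n X) = block_mat [m'] ns (\<lambda>p q. msum ([m']!p) (ns!q) (\<lambda>s. LL p s * SV s q) {..<Suc n})"
  unfolding fS_parts Sig_parts using block_mat_mult[of "[m']" ns LL ns SV]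
  by (auto intro: S_carr F_carr simp del: ns_nth)

lemma Q_SD1:
  assumes "A \<in> carrier_mat nr r"
  shows "A * d1m (Sigma n X) = block_mat [nr] ns (\<lambda>p q. A * SD1 0 q)"
  unfolding Sig_parts by (rule mult_block_left[OF assms]) (auto intro: S_carr simp del: ns_nth)

lemma Q_SD2: "lam fS * d2m (Sigma n X) = lam f * (vm X ^\<^sub>m n * d2m X)"
proof -
  have "lam fS * d2m (Sigma n X) = block_mat [m'] [r] (\<lambda>p q. msum ([m']!p) ([r]!q) (\<lambda>s. LL p s * SD2 s q) {..<length ns})"
    unfolding fS_parts Sig_parts by (rule block_mat_mult) (auto intro: S_carr F_carr simp del: ns_nth)
  also have "\<dots> = block_mat [m'] [r] (\<lambda>p q. lam f * (vm X ^\<^sub>m n * d2m X))"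
    by (rule block_mat_cong, simp only: len_ns, subst msum_single_lt[of _ 0])
      (auto simp: SD2_def LL_def mult_carrier_iff)
  also have "\<dots> = lam f * (vm X ^\<^sub>m n * d2m X)"
    by (rule block_mat_single) (simp add: mult_carrier_iff)
  finally show ?thesis .
qed



lemma aa_pred: "0 < q \<Longrightarrow> aa q = vm Y * aa (q - 1) + mu f * (vm X ^\<^sub>m (q - 1) * d2m X)"
  by (cases q) auto

lemma eq_a: "dm Y * lam fS = lam fS * dm (Sigma n X)"
  unfolding Q_left[OF carr(6)] Q_SD
proof (rule block_mat_cong)
  fix p q assume p: "p < length [m']" and q: "q < length ns"
  show "dm Y * LL 0 q = lam f * SD 0 q"
  proof (cases "q = 0")
    case True then show ?thesis by (simp add: LL_def SD_def idf(1))
  next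
    case False
    then have "dm Y * aa (q - 1) = - (lam f * (vm X ^\<^sub>m (q - 1) * d2m X))" using q by (intro daa_lt) simp
    then show ?thesis using False by (simp add: LL_def SD_def)
  qed
qed

lemma eq_b: "vm Y * lam fS + ((- dm Y) * mu fS + d2m Y * D1 fS) =
    mu fS * dm (Sigma n X) + (lam fS * vm (Sigma n X) + D2 fS * d1m (Sigma n X))"
proof -
  have L: "vm Y * lam fS + ((- dm Y) * mu fS + d2m Y * D1 fS) =
     block_mat [m'] ns (\<lambda>p q. vm Y * LL 0 q + ((- dm Y) * UU 0 q + d2m Y * EE 0 q))"
    unfolding Q_left[OF carr(7)] Q_left[OF uminus_carrier_mat[OF carr(6)]] Q_left'[OF carr(8)]
    by (subst block_mat_add, simp_all add: mult_carrier_iff, subst block_mat_add)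
       (simp_all add: mult_carrier_iff)
  have R: "mu fS * dm (Sigma n X) + (lam fS * vm (Sigma n X) + D2 fS * d1m (Sigma n X)) =
     block_mat [m'] ns (\<lambda>p q. mu f * SD 0 q + (msum ([m']!p) (ns!q) (\<lambda>s. LL p s * SV s q) {..<Suc n} + aa n * SD1 0 q))"
    unfolding Q_SD Q_SV fS_parts(4) Q_SD1[OF aa_carr]
    by (subst block_mat_add, simp_all add: mult_carrier_iff, subst block_mat_add)
       (simp_all add: mult_carrier_iff)
  show ?thesis unfolding L R
  proof (rule block_mat_cong)
    fix p q assume p: "p < length [m']" and q: "q < length ns"
    then have p0: "p = 0" and q': "q < Suc n" by auto
    show "vm Y * LL 0 q + ((- dm Y) * UU 0 q + d2m Y * EE 0 q) =
      mu f * SD 0 q + (msum ([m']!p) (ns!q) (\<lambda>s. LL p s * SV s q) {..<Suc n} + aa n * SD1 0 q)"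
    proof (cases "q = 0")
      case q0: True
      have ms: "msum ([m']!p) (ns!q) (\<lambda>s. LL p s * SV s q) {..<Suc n} = LL p 0 * SV 0 q + LL p 1 * SV 1 q"
        by (rule msum_two_lt) (use n1 q0 p0 in \<open>auto simp: SV_def LL_def mult_carrier_iff\<close>)
      have "n \<noteq> 0" using n1 by simp
      then show ?thesis unfolding ms using q0 idf(2) p0
        by (simp add: LL_def SV_def SD_def UU_def EE_def SD1_def mult_carrier_iff)
    next
      case q0: False
      show ?thesis
      proof (cases "q = n")
        case qn: True
        have ms: "msum ([m']!p) (ns!q) (\<lambda>s. LL p s * SV s q) {..<Suc n} = 0\<^sub>m ([m']!p) (ns!q)"
          by (rule msum_zero) (use q0 qn p0 in \<open>auto simp: SV_def LL_def\<close>)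
        show ?thesis unfolding ms using q0 qn aa_pred[of n] n1 p0
          by (simp add: LL_def SV_def SD_def UU_def EE_def SD1_def mult_carrier_iff)
             (rule mat_eqI_entries[of _ m' r]; simp add: mult_carrier_iff del: index_mult_mat(1))
      next
        case qn: False
        have ms: "msum ([m']!p) (ns!q) (\<lambda>s. LL p s * SV s q) {..<Suc n} = LL p (Suc q) * SV (Suc q) q"
          by (rule msum_single_lt) (use q' q0 qn p0 in \<open>auto simp: SV_def LL_def mult_carrier_iff\<close>)
        show ?thesis unfolding ms using q0 qn q' aa_pred[of q] p0
          by (simp add: LL_def SV_def SD_def UU_def EE_def SD1_def mult_carrier_iff)
             (rule mat_eqI_entries[of _ m' r]; simp add: mult_carrier_iff del: index_mult_mat(1))
      qed
    qed
  qed
qed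



lemma eq_d: "(- dm Y) * D2 fS + d2m Y * rho fS = lam fS * d2m (Sigma n X) + D2 fS * rm (Sigma n X)"
  unfolding Q_SD2 fS_parts(4,5) Sig_parts(5) using daa_n
  by (simp add: mult_carrier_iff)
     (rule mat_eqI_entries[of _ m' r]; simp add: mult_carrier_iff del: index_mult_mat(1))

lemma eq_e: "d1m Y * lam fS + rm Y * D1 fS = D1 fS * dm (Sigma n X) + rho fS * d1m (Sigma n X)"
proof -
  have z: "rm Y * D1 fS = 0\<^sub>m r' (sum_list ns)" unfolding rmY fS_parts by simp
  have L: "d1m Y * lam fS + rm Y * D1 fS = block_mat [r'] ns (\<lambda>p q. d1m Y * LL 0 q)"
    unfolding z Q_left[OF carr(9)] by (simp add: msimps)
  have R: "D1 fS * dm (Sigma n X) + rho fS * d1m (Sigma n X) =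
     block_mat [r'] ns (\<lambda>p q. D1 f * SD 0 q + tau X Y f n * SD1 0 q)"
    unfolding Q_SD fS_parts(5) Q_SD1[of "tau X Y f n" r'] 
    by (subst Q_SD1[of "tau X Y f n" r'], rule carrier_matI, simp_all, subst block_mat_add)
       (simp_all add: mult_carrier_iff)
  show ?thesis unfolding L R
  proof (rule block_mat_cong)
    fix p q assume p: "p < length [r']" and q: "q < length ns"
    then have q': "q < Suc n" by simp
    show "d1m Y * LL 0 q = D1 f * SD 0 q + tau X Y f n * SD1 0 q"
    proof (cases "q = 0")
      case True
      have "n \<noteq> 0" using n1 by simp
      then show ?thesis using True idf(4) by (simp add: LL_def SD_def SD1_def mult_carrier_iff)
    next
      case q0: False
      show ?thesis
      proof (cases "q = n")
        case True
        then show ?thesis using q0 unfolding tau_n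
          by (simp add: LL_def SD_def SD1_def mult_carrier_iff)
             (rule mat_eqI_entries[of _ r' r]; simp add: mult_carrier_iff del: index_mult_mat(1))
      next
        case False
        then have "d1m Y * aa (q - 1) = - (D1 f * (vm X ^\<^sub>m (q - 1) * d2m X))"
          using q' q0 by (intro tau_lt) simp
        then show ?thesis using q0 False q' by (simp add: LL_def SD_def SD1_def mult_carrier_iff)
      qed
    qed
  qed
qed

lemma fS_dims[simp]: "dim_row (lam fS) = m'" "dim_col (lam fS) = sum_list ns"
  "dim_row (mu fS) = m'" "dim_col (mu fS) = sum_list ns"
  "dim_row (D1 fS) = r'" "dim_col (D1 fS) = sum_list ns"
  "dim_row (D2 fS) = m'" "dim_col (D2 fS) = r"
  "dim_row (rho fS) = r'" "dim_col (rho fS) = r"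
  by (simp_all add: fS_parts)

lemma Sig_dims[simp]: "dim_row (dm (Sigma n X)) = sum_list ns" "dim_col (dm (Sigma n X)) = sum_list ns"
  "dim_row (vm (Sigma n X)) = sum_list ns" "dim_col (vm (Sigma n X)) = sum_list ns"
  "dim_row (d2m (Sigma n X)) = sum_list ns" "dim_col (d2m (Sigma n X)) = r"
  "dim_row (d1m (Sigma n X)) = r" "dim_col (d1m (Sigma n X)) = sum_list ns"
  by (simp_all add: Sig_parts)

lemma smor_fS: "is_smor (k - 2 * int n) (Sigma n X) Y fS"
  unfolding is_smor_def
proof (intro conjI)
  show "graded_map (cdeg (Sigma n X)) (cdeg Y) (k - 2 * int n) (lam fS)"
    "graded_map (cdeg (Sigma n X)) (shift 1 (cdeg Y)) (k - 2 * int n) (mu fS)"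
    "graded_map (rdeg (Sigma n X)) (shift 1 (cdeg Y)) (k - 2 * int n) (D2 fS)"
    "graded_map (cdeg (Sigma n X)) (rdeg Y) (k - 2 * int n) (D1 fS)"
    "graded_map (rdeg (Sigma n X)) (rdeg Y) (k - 2 * int n) (rho fS)" by (rule gfS)+
  show "stot Y * mtot (Sigma n X) Y fS = mtot (Sigma n X) Y fS * stot (Sigma n X)"
  proof (subst smor_eq[where m = "sum_list ns" and r = r and m' = m' and r' = r'])
    show "dm Y * lam fS = lam fS * dm (Sigma n X) \<and>
     vm Y * lam fS + ((- dm Y) * mu fS + d2m Y * D1 fS) = mu fS * dm (Sigma n X) + (lam fS * vm (Sigma n X) + D2 fS * d1m (Sigma n X)) \<and>
     (- dm Y) * lam fS = lam fS * (- dm (Sigma n X)) \<and>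
     (- dm Y) * D2 fS + d2m Y * rho fS = lam fS * d2m (Sigma n X) + D2 fS * rm (Sigma n X) \<and>
     d1m Y * lam fS + rm Y * D1 fS = D1 fS * dm (Sigma n X) + rho fS * d1m (Sigma n X) \<and>
     rm Y * rho fS = rho fS * rm (Sigma n X)"
      using eq_a eq_b eq_d eq_e by (simp add: rmY Sig_parts(5) fS_parts(5))
  qed (auto intro!: carrier_matI simp: len_cdegS Sig_parts(5,6))
qed



definition IL :: "nat \<Rightarrow> nat \<Rightarrow> 'a mat" where
  "IL p q = (if p = 0 then 1\<^sub>m m else 0\<^sub>m (ns ! p) m)"
definition ID2 :: "nat \<Rightarrow> nat \<Rightarrow> 'a mat" where
  "ID2 p q = (if p = 1 then 1\<^sub>m r else 0\<^sub>m (ns ! p) r)"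

lemma iota_parts: "lam (iota n X) = block_mat ns [m] IL" "mu (iota n X) = 0\<^sub>m (sum_list ns) m"
  "D1 (iota n X) = 0\<^sub>m r m" "D2 (iota n X) = block_mat ns [r] ID2" "rho (iota n X) = 0\<^sub>m r r"
  unfolding iota_def Let_def IL_def ID2_def by simp_all

lemma I_carr: "p < Suc n \<Longrightarrow> IL p q \<in> carrier_mat (ns ! p) m" "p < Suc n \<Longrightarrow> ID2 p q \<in> carrier_mat (ns ! p) r"
  using n1 by (auto simp: IL_def ID2_def)

lemma C1: "lam fS * lam (iota n X) = lam f"
proof -
  have "lam fS * lam (iota n X) = block_mat [m'] [m] (\<lambda>p q. msum ([m']!p) ([m]!q) (\<lambda>s. LL p s * IL s q) {..<length ns})"
    unfolding fS_parts iota_parts by (rule block_mat_mult) (auto intro: I_carr F_carr simp del: ns_nth)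
  also have "\<dots> = block_mat [m'] [m] (\<lambda>p q. lam f)"
    by (rule block_mat_cong, simp only: len_ns, subst msum_single_lt[of _ 0])
      (auto simp: IL_def LL_def mult_carrier_iff)
  also have "\<dots> = lam f" by (rule block_mat_single) simp
  finally show ?thesis .
qed

lemma C2: "mu fS * lam (iota n X) = mu f"
proof -
  have "mu fS * lam (iota n X) = block_mat [m'] [m] (\<lambda>p q. msum ([m']!p) ([m]!q) (\<lambda>s. UU p s * IL s q) {..<length ns})"
    unfolding fS_parts iota_parts by (rule block_mat_mult) (auto intro: I_carr F_carr simp del: ns_nth)
  also have "\<dots> = block_mat [m'] [m] (\<lambda>p q. mu f)"
    by (rule block_mat_cong, simp only: len_ns, subst msum_single_lt[of _ 0])
      (auto simp: IL_def UU_def mult_carrier_iff)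
  also have "\<dots> = mu f" by (rule block_mat_single) simp
  finally show ?thesis .
qed

lemma C3: "D1 fS * lam (iota n X) = D1 f"
proof -
  have "D1 fS * lam (iota n X) = block_mat [r'] [m] (\<lambda>p q. msum ([r']!p) ([m]!q) (\<lambda>s. EE p s * IL s q) {..<length ns})"
    unfolding fS_parts iota_parts by (rule block_mat_mult) (auto intro: I_carr F_carr simp del: ns_nth)
  also have "\<dots> = block_mat [r'] [m] (\<lambda>p q. D1 f)"
    by (rule block_mat_cong, simp only: len_ns, subst msum_single_lt[of _ 0])
      (auto simp: IL_def EE_def mult_carrier_iff)
  also have "\<dots> = D1 f" by (rule block_mat_single) simp
  finally show ?thesis .
qed

lemma C4: "lam fS * D2 (iota n X) = D2 f"
proof -
  have "lam fS * D2 (iota n X) = block_mat [m'] [r] (\<lambda>p q. msum ([m']!p) ([r]!q) (\<lambda>s. LL p s * ID2 s q) {..<length ns})"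
    unfolding fS_parts iota_parts by (rule block_mat_mult) (auto intro: I_carr F_carr simp del: ns_nth)
  also have "\<dots> = block_mat [m'] [r] (\<lambda>p q. D2 f)"
    by (rule block_mat_cong, simp only: len_ns, subst msum_single_lt[of _ 1])
      (use n1 in \<open>auto simp: ID2_def LL_def mult_carrier_iff\<close>)
  also have "\<dots> = D2 f" by (rule block_mat_single) simp
  finally show ?thesis .
qed

lemma iota_dims[simp]: "dim_row (lam (iota n X)) = sum_list ns" "dim_col (lam (iota n X)) = m"
  "dim_row (D2 (iota n X)) = sum_list ns" "dim_col (D2 (iota n X)) = r"
  by (simp_all add: iota_parts)

lemma comp: "mtot (Sigma n X) Y fS * mtot X (Sigma n X) (iota n X) = mtot X Y f"
proof -
  define M where "M = sum_list ns"
  define T' where "T' = (\<lambda>p q. [[lam fS, 0\<^sub>m m' M, 0\<^sub>m m' r],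
                [mu fS, lam fS, D2 fS],
                [D1 fS, 0\<^sub>m r' M, rho fS]] ! p ! q)"
  define I where "I = (\<lambda>p q. [[lam (iota n X), 0\<^sub>m M m, 0\<^sub>m M r],
                [mu (iota n X), lam (iota n X), D2 (iota n X)],
                [D1 (iota n X), 0\<^sub>m r m, rho (iota n X)]] ! p ! q)"
  define T where "T = (\<lambda>p q. [[lam f, 0\<^sub>m m' m, 0\<^sub>m m' r],
                [mu f, lam f, D2 f],
                [D1 f, 0\<^sub>m r' m, rho f]] ! p ! q)"
  have m1: "mtot (Sigma n X) Y fS = block_mat [m',m',r'] [M,M,r] T'"
    unfolding mtot_def T'_def M_def by (simp add: len_cdegS Sig_parts(6) Let_def)
  have m2: "mtot X (Sigma n X) (iota n X) = block_mat [M,M,r] [m,m,r] I"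
    unfolding mtot_def I_def M_def by (simp add: len_cdegS Sig_parts(6) Let_def)
  have m3: "mtot X Y f = block_mat [m',m',r'] [m,m,r] T"
    unfolding mtot_def T_def by (simp add: Let_def)
  have T'c: "T' p q \<in> carrier_mat ([m',m',r']!p) ([M,M,r]!q)" if "p < length [m',m',r']" "q < length [M,M,r]" for p q
  proof -
    have "p < 3" "q < 3" using that by auto
    then show ?thesis by (auto simp: T'_def M_def dest!: less3_cases intro!: carrier_matI)
  qed
  have Ic: "I p q \<in> carrier_mat ([M,M,r]!p) ([m,m,r]!q)" if "p < length [M,M,r]" "q < length [m,m,r]" for p q
  proof -
    have "p < 3" "q < 3" using that by auto
    then show ?thesis by (auto simp: I_def M_def iota_parts(2,3,5) dest!: less3_cases intro!: carrier_matI)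
  qed
  have Tc: "T p q \<in> carrier_mat ([m',m',r']!p) ([m,m,r]!q)" if "p < length [m',m',r']" "q < length [m,m,r]" for p q
  proof -
    have "p < 3" "q < 3" using that by auto
    then show ?thesis by (auto simp: T_def dest!: less3_cases)
  qed
  have l3: "length [M,M,r] = 3" by simp
  have p1: "mtot (Sigma n X) Y fS * mtot X (Sigma n X) (iota n X) =
     block_mat [m',m',r'] [m,m,r] (\<lambda>p q. msum ([m',m',r']!p) ([m,m,r]!q) (\<lambda>s. T' p s * I s q) {..<length [M,M,r]})"
    unfolding m1 m2 by (rule block_mat_mult) (use T'c Ic in auto)
  have "block_mat [m',m',r'] [m,m,r] (\<lambda>p q. msum ([m',m',r']!p) ([m,m,r]!q) (\<lambda>s. T' p s * I s q) {..<3}) =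
        block_mat [m',m',r'] [m,m,r] T"
  proof (rule block_mat_cong)
    fix p q assume "p < length [m',m',r']" "q < length [m,m,r]"
    then have "p < 3" "q < 3" by auto
    then show "msum ([m',m',r']!p) ([m,m,r]!q) (\<lambda>s. T' p s * I s q) {..<3} = T p q"
      by (auto simp: msum_3 T'_def I_def T_def M_def C1 C2 C3 C4 iota_parts(2,3,5) rho0 mult_carrier_iff msimps dest!: less3_cases)
  qed
  then show ?thesis unfolding p1 m3 l3 .
qed



lemma hmS: "height_mor 0 (k - 2 * int n) (Sigma n X) Y fS"
  unfolding height_mor_def using evk rpS smor_fS hm by (simp add: height_mor_def)

lemma tau0S: "tau (Sigma n X) Y fS 0 = tau X Y f n"
  by (simp add: fS_parts)


end

theorem proposition2p14:
  fixes X Y :: "'a::comm_ring_1 scx" and f :: "'a smor" and n :: nat and k :: int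
  assumes "n \<ge> 1"
  shows "(height_mor n k X Y f \<longrightarrow>
            (\<exists>k' f'. height_mor 0 k' (Sigma n X) Y f' \<and>
                mtot (Sigma n X) Y f' * mtot X (Sigma n X) (iota n X) = mtot X Y f)) \<and>
         (strong_height_mor n k X Y f \<longrightarrow>
            (\<exists>k' f'. strong_height_mor 0 k' (Sigma n X) Y f' \<and>
                mtot (Sigma n X) Y f' * mtot X (Sigma n X) (iota n X) = mtot X Y f))"
proof (intro conjI impI)
  assume h: "height_mor n k X Y f"
  interpret hs X Y f n k using h assms by unfold_locales
  show "\<exists>k' f'. height_mor 0 k' (Sigma n X) Y f' \<and>
                mtot (Sigma n X) Y f' * mtot X (Sigma n X) (iota n X) = mtot X Y f"
    using hmS comp by blast
next
  assume h: "strong_height_mor n k X Y f"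
  then have h1: "height_mor n k X Y f" and inv: "invertible_mat (tau X Y f n)"
    by (simp_all add: strong_height_mor_def)
  interpret hs X Y f n k using h1 assms by unfold_locales
  have "strong_height_mor 0 (k - 2 * int n) (Sigma n X) Y fS"
    unfolding strong_height_mor_def using hmS inv tau0S by simp
  then show "\<exists>k' f'. strong_height_mor 0 k' (Sigma n X) Y f' \<and>
                mtot (Sigma n X) Y f' * mtot X (Sigma n X) (iota n X) = mtot X Y f"
    using comp by blast
qed

end
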